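(* Let $A$ and $B$ be locally constant (unoriented) algebraic conformal nets, identified with commutative algebras over a field $\mathbf{K}$. Then locally constant algebraic defects between $A$ and $B$ are the same as pairs $(D,\varphi)$ where $D$ is an associative $\mathbf{K}$-algebra and $\varphi\colon A\otimes B\to Z(D)$ is an algebra homomorphism from $A\otimes B$ to the center of $D$.
   Context: Fix a field $\mathbf{K}$; all algebras are associative $\mathbf{K}$-algebras. Let $\mathsf{INT}$ be the category of compact connected oriented submanifolds (intervals) of $\mathbf{R}$ with orientation-preserving embeddings. An algebraic conformal net is a functor $\mathcal{A}\colon\mathsf{INT}\to\mathsf{Algebra}$ with $\mathcal{A}(\overline I)=\mathcal{A}(I)^{\mathrm{op}}$, satisfying isotony (images of embeddings are injective), locality (images of algebras of subintervals with disjoint interiors commute in the algebra of the ambient interval) and strong additivity (if $K=I\cup J$ then $\mathcal{A}(K)$ is generated by the images of $\mathcal{A}(I)$ and $\mathcal{A}(J)$). It is locally constant if it sends every positively-oriented interval to the same algebra $A$ and every embedding between positively-oriented intervals to $\mathrm{id}_A$; by locality $A$ is then commutative, and it is called unoriented if all morphisms are sent to $\mathrm{id}_A$. Let $\mathcal{S}^1$ be the unit circle, colored white on its left open half, black on its right open half, with special points $i$ and $-i$. Bicolored circle intervals are compact connected oriented submanifolds of $\mathcal{S}^1$ not containing $-i$ (and containing a neighborhood of $i$ if they contain $i$); they form a category $\mathsf{INT}_{\circ\bullet}$ with color-preserving orientation-preserving embeddings. Its subcategories of white intervals (contained in the left half), black intervals (contained in the right half) and genuinely bicolored intervals (containing $i$)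 are denoted $\mathsf{INT}_\circ$, $\mathsf{INT}_\bullet$, $\mathsf{INT}_{\circ\bullet}^{\mathrm{gen}}$. The maps $x\mapsto \exp(i\arctan x)$ and $x\mapsto -\exp(i\arctan x)$ identify $\mathbf{R}$ with the black and white halves, inducing functors $\Phi_\bullet,\Phi_\circ\colon\mathsf{INT}\to\mathsf{INT}_{\circ\bullet}$. An algebraic defect between conformal nets $\mathcal{A}$ and $\mathcal{B}$ is a functor $D\colon\mathsf{INT}_{\circ\bullet}\to\mathsf{Algebra}$ with $D(\overline I)=D(I)^{\mathrm{op}}$ together with natural isomorphisms $\sigma_\circ\colon\mathcal{A}\Rightarrow D\circ\Phi_\circ$ and $\sigma_\bullet\colon\mathcal{B}\Rightarrow D\circ\Phi_\bullet$, satisfying isotony on embeddings of genuinely bicolored intervals, locality (images of $D(I)$, $D(J)$ for subintervals with disjoint interiors commute in $D(K)$) and strong additivity. A defect between locally constant nets $A$ and $B$ is locally constant if $D$ sends every orientation-preserving morphism within $\mathsf{INT}_\circ$, within $\mathsf{INT}_\bullet$, and within $\mathsf{INT}_{\circ\bullet}^{\mathrm{gen}}$ to an identity, is constant on morphisms from white intervals to genuinely bicolored intervals and on morphisms from black intervals to genuinely bicolored intervals, and $\sigma_\circ,\sigma_\bullet$ are identities. In the correspondence, $D$ is the value of the defect on genuinely bicolored intervals, and the maps $A\to D$, $B\to D$ induced by inclusions of white, resp. black, intervals into genuinely bicolored ones are the restrictions of $\varphi$ to $A\otimes 1$, resp. $1\otimes B$. *)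

theory Defs
  imports "HOL-Analysis.Analysis"
begin

record ('u, 'k) kalg =
  acar  :: "'u set"
  azero :: 'u
  aone  :: 'u
  aadd  :: "'u \<Rightarrow> 'u \<Rightarrow> 'u"
  amul  :: "'u \<Rightarrow> 'u \<Rightarrow> 'u"
  asmult :: "'k \<Rightarrow> 'u \<Rightarrow> 'u"

definition is_kalg :: "('u, 'k::field) kalg \<Rightarrow> bool" where
  "is_kalg A \<longleftrightarrow>
     azero A \<in> acar A \<and> aone A \<in> acar A \<and>
     (\<forall>x\<in>acar A. \<forall>y\<in>acar A. aadd A x y \<in> acar A \<and> amul A x y \<in> acar A) \<and>
     (\<forall>c. \<forall>x\<in>acar A. asmult A c x \<in> acar A) \<and>
     (\<forall>x\<in>acar A. \<forall>y\<in>acar A. \<forall>z\<in>acar A.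
        aadd A (aadd A x y) z = aadd A x (aadd A y z) \<and>
        amul A (amul A x y) z = amul A x (amul A y z) \<and>
        amul A x (aadd A y z) = aadd A (amul A x y) (amul A x z) \<and>
        amul A (aadd A x y) z = aadd A (amul A x z) (amul A y z)) \<and>
     (\<forall>x\<in>acar A. \<forall>y\<in>acar A. aadd A x y = aadd A y x) \<and>
     (\<forall>x\<in>acar A. aadd A (azero A) x = x) \<and>
     (\<forall>x\<in>acar A. \<exists>y\<in>acar A. aadd A x y = azero A) \<and>
     (\<forall>x\<in>acar A. amul A (aone A) x = x \<and> amul A x (aone A) = x) \<and>
     (\<forall>c d. \<forall>x\<in>acar A. \<forall>y\<in>acar A.
        asmult A c (aadd A x y) = aadd A (asmult A c x) (asmult A c y) \<and>
        asmult A (c + d) x = aadd A (asmult A c x) (asmult A d x) \<and>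
        asmult A (c * d) x = asmult A c (asmult A d x) \<and>
        asmult A c (amul A x y) = amul A (asmult A c x) y \<and>
        asmult A c (amul A x y) = amul A x (asmult A c y)) \<and>
     (\<forall>x\<in>acar A. asmult A 1 x = x)"

definition kalg_comm :: "('u, 'k) kalg \<Rightarrow> bool" where
  "kalg_comm A \<longleftrightarrow> (\<forall>x\<in>acar A. \<forall>y\<in>acar A. amul A x y = amul A y x)"

definition kalg_op :: "('u, 'k) kalg \<Rightarrow> ('u, 'k) kalg" where
  "kalg_op A = A\<lparr>amul := (\<lambda>x y. amul A y x)\<rparr>"

definition kalg_hom :: "('u, 'k) kalg \<Rightarrow> ('v, 'k) kalg \<Rightarrow> ('u \<Rightarrow> 'v) \<Rightarrow> bool" where
  "kalg_hom A C h \<longleftrightarrow>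
     (\<forall>x\<in>acar A. h x \<in> acar C) \<and>
     (\<forall>x\<in>acar A. \<forall>y\<in>acar A. h (aadd A x y) = aadd C (h x) (h y) \<and>
                              h (amul A x y) = amul C (h x) (h y)) \<and>
     (\<forall>c. \<forall>x\<in>acar A. h (asmult A c x) = asmult C c (h x)) \<and>
     h (aone A) = aone C"

definition kalg_center :: "('u, 'k) kalg \<Rightarrow> 'u set" where
  "kalg_center C = {z \<in> acar C. \<forall>x\<in>acar C. amul C z x = amul C x z}"

definition kalg_subalg :: "('u, 'k) kalg \<Rightarrow> 'u set \<Rightarrow> bool" where
  "kalg_subalg C S \<longleftrightarrow> S \<subseteq> acar C \<and> azero C \<in> S \<and> aone C \<in> S \<and>
     (\<forall>x\<in>S. \<forall>y\<in>S. aadd C x y \<in> S \<and> amul C x y \<in> S) \<and>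
     (\<forall>c. \<forall>x\<in>S. asmult C c x \<in> S)"

definition kalg_generates :: "('u, 'k) kalg \<Rightarrow> 'u set \<Rightarrow> bool" where
  "kalg_generates C X \<longleftrightarrow> (\<forall>S. kalg_subalg C S \<and> X \<subseteq> S \<longrightarrow> acar C \<subseteq> S)"

text \<open>An algebra homomorphism \<open>A \<otimes> B \<rightarrow> Z(C)\<close>, written out through the universal
  property of the tensor product: \<open>\<phi> a b\<close> is the value on \<open>a \<otimes> b\<close>; linear maps out of
  \<open>A \<otimes> B\<close> are exactly bilinear maps on \<open>A \<times> B\<close>, and multiplicativity/unitality is
  checked on pure tensors.\<close>
definition tensor_center_hom ::
    "('u, 'k) kalg \<Rightarrow> ('u, 'k) kalg \<Rightarrow> ('u, 'k) kalg \<Rightarrow> ('u \<Rightarrow> 'u \<Rightarrow> 'u) \<Rightarrow> bool" where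
  "tensor_center_hom A B C \<phi> \<longleftrightarrow>
     (\<forall>a\<in>acar A. \<forall>b\<in>acar B. \<phi> a b \<in> kalg_center C) \<and>
     (\<forall>a\<in>acar A. \<forall>a'\<in>acar A. \<forall>b\<in>acar B.
        \<phi> (aadd A a a') b = aadd C (\<phi> a b) (\<phi> a' b)) \<and>
     (\<forall>a\<in>acar A. \<forall>b\<in>acar B. \<forall>b'\<in>acar B.
        \<phi> a (aadd B b b') = aadd C (\<phi> a b) (\<phi> a b')) \<and>
     (\<forall>c. \<forall>a\<in>acar A. \<forall>b\<in>acar B.
        \<phi> (asmult A c a) b = asmult C c (\<phi> a b) \<and> \<phi> a (asmult B c b) = asmult C c (\<phi> a b)) \<and>
     (\<forall>a\<in>acar A. \<forall>a'\<in>acar A. \<forall>b\<in>acar B. \<forall>b'\<in>acar B.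
        \<phi> (amul A a a') (amul B b b') = amul C (\<phi> a b) (\<phi> a' b')) \<and>
     \<phi> (aone A) (aone B) = aone C"

text \<open>An oriented interval is a triple (lo, hi, o) standing for the compact interval
  [lo, hi] (lo < hi) with orientation o (True = orientation of increasing coordinate).
  Bicoloured circle intervals are described in the angle coordinate
  \<open>\<theta> \<in> (-pi/2, 3pi/2)\<close> of \<open>S\<^sup>1 - {-i}\<close>, \<open>\<theta> \<mapsto> exp(i\<theta>)\<close>; then i is \<open>\<theta> = pi/2\<close>,
  the black (right) half is \<open>\<theta> < pi/2\<close> and the white (left) half is \<open>\<theta> > pi/2\<close>.\<close>

type_synonym ointv = "real \<times> real \<times> bool"

definition lo :: "ointv \<Rightarrow> real" where "lo I = fst I"
definition hi :: "ointv \<Rightarrow> real" where "hi I = fst (snd I)"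
definition ori :: "ointv \<Rightarrow> bool" where "ori I = snd (snd I)"
definition iset :: "ointv \<Rightarrow> real set" where "iset I = {lo I .. hi I}"
definition iint :: "ointv \<Rightarrow> real set" where "iint I = {lo I <..< hi I}"
definition irev :: "ointv \<Rightarrow> ointv" where "irev I = (lo I, hi I, \<not> ori I)"

text \<open>Smooth (C-infinity) orientation-preserving embedding of I into J, represented by a
  function real => real (only its values on I matter); smoothness up to the boundary is
  expressed by extension to a smooth function on an open neighbourhood.\<close>
definition smooth_emb :: "ointv \<Rightarrow> ointv \<Rightarrow> (real \<Rightarrow> real) \<Rightarrow> bool" where
  "smooth_emb I J f \<longleftrightarrow>
     (\<exists>U g. open U \<and> iset I \<subseteq> U \<and>
        (\<forall>n. \<forall>x\<in>U. ((deriv ^^ n) g) differentiable (at x)) \<and>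
        (\<forall>x\<in>iset I. g x = f x) \<and>
        (\<forall>x\<in>iset I. if ori I = ori J then deriv g x > 0 else deriv g x < 0)) \<and>
     (\<forall>x\<in>iset I. f x \<in> iset J)"

definition int_obj :: "ointv \<Rightarrow> bool" where "int_obj I \<longleftrightarrow> lo I < hi I"
definition int_hom :: "ointv \<Rightarrow> ointv \<Rightarrow> (real \<Rightarrow> real) \<Rightarrow> bool" where
  "int_hom I J f \<longleftrightarrow> int_obj I \<and> int_obj J \<and> smooth_emb I J f"

datatype colour = White | Black | Special

definition colour_of :: "real \<Rightarrow> colour" where
  "colour_of t = (if t < pi/2 then Black else if t > pi/2 then White else Special)"

definition cb_obj :: "ointv \<Rightarrow> bool" where
  "cb_obj I \<longleftrightarrow> - (pi/2) < lo I \<and> lo I < hi I \<and> hi I < 3 * pi / 2 \<and>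
                lo I \<noteq> pi/2 \<and> hi I \<noteq> pi/2"

definition cb_hom :: "ointv \<Rightarrow> ointv \<Rightarrow> (real \<Rightarrow> real) \<Rightarrow> bool" where
  "cb_hom I J f \<longleftrightarrow> cb_obj I \<and> cb_obj J \<and> smooth_emb I J f \<and>
                     (\<forall>x\<in>iset I. colour_of (f x) = colour_of x)"

definition is_white :: "ointv \<Rightarrow> bool" where "is_white I \<longleftrightarrow> cb_obj I \<and> pi/2 < lo I"
definition is_black :: "ointv \<Rightarrow> bool" where "is_black I \<longleftrightarrow> cb_obj I \<and> hi I < pi/2"
definition is_gen :: "ointv \<Rightarrow> bool" where "is_gen I \<longleftrightarrow> cb_obj I \<and> lo I < pi/2 \<and> pi/2 < hi I"

definition cb_subint :: "ointv \<Rightarrow> ointv \<Rightarrow> bool" where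
  "cb_subint I K \<longleftrightarrow> cb_obj I \<and> cb_obj K \<and> ori I = ori K \<and> iset I \<subseteq> iset K"

text \<open>The functors Phi_white (x \<mapsto> -exp(i arctan x)) and Phi_black (x \<mapsto> exp(i arctan x)).\<close>
definition phiW_obj :: "ointv \<Rightarrow> ointv" where
  "phiW_obj I = (arctan (lo I) + pi, arctan (hi I) + pi, ori I)"
definition phiB_obj :: "ointv \<Rightarrow> ointv" where
  "phiB_obj I = (arctan (lo I), arctan (hi I), ori I)"
definition phiW_mor :: "(real \<Rightarrow> real) \<Rightarrow> real \<Rightarrow> real" where
  "phiW_mor f = (\<lambda>t. arctan (f (tan (t - pi))) + pi)"
definition phiB_mor :: "(real \<Rightarrow> real) \<Rightarrow> real \<Rightarrow> real" where
  "phiB_mor f = (\<lambda>t. arctan (f (tan t)))"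

text \<open>The locally constant unoriented algebraic conformal net given by a commutative
  algebra A: positive intervals go to A, negative ones to A^op, all morphisms to identities.\<close>
definition lc_net_obj :: "('u, 'k) kalg \<Rightarrow> ointv \<Rightarrow> ('u, 'k) kalg" where
  "lc_net_obj A I = (if ori I then A else kalg_op A)"

type_synonym ('u, 'k) defect_obj = "ointv \<Rightarrow> ('u, 'k) kalg"
type_synonym 'u defect_mor = "ointv \<Rightarrow> ointv \<Rightarrow> (real \<Rightarrow> real) \<Rightarrow> 'u \<Rightarrow> 'u"

definition is_identity_on :: "('u, 'k) kalg \<Rightarrow> ('u \<Rightarrow> 'u) \<Rightarrow> bool" where
  "is_identity_on C h \<longleftrightarrow> (\<forall>x\<in>acar C. h x = x)"

text \<open>Locally constant algebraic defect between the locally constant nets A and B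
  (the natural isomorphisms sigma are identities).\<close>
definition lc_defect ::
    "('u, 'k::field) kalg \<Rightarrow> ('u, 'k) kalg \<Rightarrow> ('u, 'k) defect_obj \<Rightarrow> 'u defect_mor \<Rightarrow> bool" where
  "lc_defect A B Dob Dmor \<longleftrightarrow>
     \<comment> \<open>functor to algebras\<close>
     (\<forall>I. cb_obj I \<longrightarrow> is_kalg (Dob I)) \<and>
     (\<forall>I J f. cb_hom I J f \<longrightarrow> kalg_hom (Dob I) (Dob J) (Dmor I J f)) \<and>
     (\<forall>I J f f'. cb_hom I J f \<and> cb_hom I J f' \<and> (\<forall>t\<in>iset I. f t = f' t) \<longrightarrow>
        (\<forall>x\<in>acar (Dob I). Dmor I J f x = Dmor I J f' x)) \<and>
     (\<forall>I. cb_obj I \<longrightarrow> is_identity_on (Dob I) (Dmor I I id)) \<and>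
     (\<forall>I J K f g. cb_hom I J f \<and> cb_hom J K g \<longrightarrow>
        (\<forall>x\<in>acar (Dob I). Dmor I K (g \<circ> f) x = Dmor J K g (Dmor I J f x))) \<and>
     \<comment> \<open>D(I bar) = D(I)^op\<close>
     (\<forall>I. cb_obj I \<longrightarrow> Dob (irev I) = kalg_op (Dob I)) \<and>
     \<comment> \<open>sigma_white, sigma_black are identities: D o Phi_white = A, D o Phi_black = B\<close>
     (\<forall>I. int_obj I \<longrightarrow> Dob (phiW_obj I) = lc_net_obj A I \<and> Dob (phiB_obj I) = lc_net_obj B I) \<and>
     (\<forall>I J f. int_hom I J f \<longrightarrow>
        is_identity_on (Dob (phiW_obj I)) (Dmor (phiW_obj I) (phiW_obj J) (phiW_mor f)) \<and>
        is_identity_on (Dob (phiB_obj I)) (Dmor (phiB_obj I) (phiB_obj J) (phiB_mor f))) \<and>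
     \<comment> \<open>isotony on genuinely bicoloured intervals\<close>
     (\<forall>I J f. cb_hom I J f \<and> is_gen I \<and> is_gen J \<longrightarrow> inj_on (Dmor I J f) (acar (Dob I))) \<and>
     \<comment> \<open>locality\<close>
     (\<forall>I J K. cb_subint I K \<and> cb_subint J K \<and> iint I \<inter> iint J = {} \<longrightarrow>
        (\<forall>x\<in>acar (Dob I). \<forall>y\<in>acar (Dob J).
           amul (Dob K) (Dmor I K id x) (Dmor J K id y) =
           amul (Dob K) (Dmor J K id y) (Dmor I K id x))) \<and>
     \<comment> \<open>strong additivity\<close>
     (\<forall>I J K. cb_subint I K \<and> cb_subint J K \<and> iset K = iset I \<union> iset J \<longrightarrow>
        kalg_generates (Dob K) (Dmor I K id ` acar (Dob I) \<union> Dmor J K id ` acar (Dob J))) \<and>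
     \<comment> \<open>local constancy: orientation-preserving morphisms within INT_white, INT_black,
         INT_gen go to identities\<close>
     (\<forall>I J f. cb_hom I J f \<and> ori I = ori J \<and>
        ((is_white I \<and> is_white J) \<or> (is_black I \<and> is_black J) \<or> (is_gen I \<and> is_gen J)) \<longrightarrow>
        Dob J = Dob I \<and> is_identity_on (Dob I) (Dmor I J f)) \<and>
     \<comment> \<open>constant on morphisms white -> gen and on morphisms black -> gen\<close>
     (\<forall>I J f I' J' f'. cb_hom I J f \<and> cb_hom I' J' f' \<and> is_white I \<and> is_white I' \<and>
        is_gen J \<and> is_gen J' \<longrightarrow> (\<forall>x\<in>acar (Dob I). Dmor I J f x = Dmor I' J' f' x)) \<and>
     (\<forall>I J f I' J' f'. cb_hom I J f \<and> cb_hom I' J' f' \<and> is_black I \<and> is_black I' \<and>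
        is_gen J \<and> is_gen J' \<longrightarrow> (\<forall>x\<in>acar (Dob I). Dmor I J f x = Dmor I' J' f' x))"

definition I0 :: ointv where "I0 = (pi/4, 3*pi/4, True)"
definition W0 :: ointv where "W0 = (5*pi/8, 3*pi/4, True)"
definition B0 :: ointv where "B0 = (pi/4, 3*pi/8, True)"

text \<open>The defect (Dob, Dmor) corresponds to (D, phi): D is its value on genuinely
  bicoloured intervals, and the maps A -> D, B -> D induced by inclusions of white, resp.
  black, intervals are phi restricted to A (x) 1, resp. 1 (x) B.\<close>
definition corresponds ::
    "('u, 'k) kalg \<Rightarrow> ('u, 'k) kalg \<Rightarrow> ('u, 'k) defect_obj \<Rightarrow> 'u defect_mor \<Rightarrow>
     ('u, 'k) kalg \<Rightarrow> ('u \<Rightarrow> 'u \<Rightarrow> 'u) \<Rightarrow> bool" where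
  "corresponds A B Dob Dmor D \<phi> \<longleftrightarrow>
     Dob I0 = D \<and>
     (\<forall>a\<in>acar A. Dmor W0 I0 id a = \<phi> a (aone B)) \<and>
     (\<forall>b\<in>acar B. Dmor B0 I0 id b = \<phi> (aone A) b)"

end

theory Submission
  imports Defs
begin


definition smooth_on :: "real set \<Rightarrow> (real \<Rightarrow> real) \<Rightarrow> bool" where
  "smooth_on U g \<longleftrightarrow> (\<forall>n. \<forall>x\<in>U. (deriv ^^ n) g differentiable (at x))"

lemma diff_transfer:
  fixes f g :: "real \<Rightarrow> real"
  assumes "open U" "x \<in> U" "\<forall>y\<in>U. f y = g y" "g differentiable (at x)"
  shows "f differentiable (at x)" "deriv f x = deriv g x"
proof -
  have "eventually (\<lambda>y. y \<in> U) (nhds x)" using assms(1,2) by (rule eventually_nhds_in_open)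
  then have ev: "eventually (\<lambda>y. f y = g y) (nhds x)"
    by (rule eventually_mono) (use assms(3) in simp)
  have dg: "DERIV g x :> deriv g x" using assms(4) by (simp only: DERIV_deriv_iff_real_differentiable)
  have df: "DERIV f x :> deriv g x" by (subst DERIV_cong_ev[OF refl ev refl]) (rule dg)
  show "f differentiable (at x)" unfolding real_differentiable_def using df by (rule exI)
  show "deriv f x = deriv g x" using df by (rule DERIV_imp_deriv)
qed

lemma smooth_coind:
  assumes U: "open U" and d: "\<forall>s\<in>S. \<forall>x\<in>U. s differentiable (at x)"
    and h: "\<forall>s\<in>S. \<exists>h\<in>S. \<forall>x\<in>U. deriv s x = h x" and s: "s \<in> S"
  shows "smooth_on U s"
proof -
  have key: "\<forall>s\<in>S. \<exists>h\<in>S. \<forall>x\<in>U. (deriv ^^ n) s x = h x" for n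
  proof (induction n)
    case 0 then show ?case by auto
  next
    case (Suc n)
    show ?case
    proof
      fix s assume "s \<in> S"
      then obtain h1 where h1: "h1 \<in> S" "\<forall>x\<in>U. (deriv ^^ n) s x = h1 x" using Suc by blast
      then obtain h2 where h2: "h2 \<in> S" "\<forall>x\<in>U. deriv h1 x = h2 x" using h by blast
      have "\<forall>x\<in>U. (deriv ^^ Suc n) s x = h2 x"
      proof
        fix x assume "x \<in> U"
        have "(deriv ^^ Suc n) s x = deriv ((deriv ^^ n) s) x" by simp
        also have "\<dots> = deriv h1 x"
          using diff_transfer(2)[OF U \<open>x\<in>U\<close> h1(2)] d h1(1) \<open>x\<in>U\<close> by blast
        finally show "(deriv ^^ Suc n) s x = h2 x" using h2 \<open>x\<in>U\<close> by simp
      qed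
      then show "\<exists>h\<in>S. \<forall>x\<in>U. (deriv ^^ Suc n) s x = h x" using h2 by blast
    qed
  qed
  show ?thesis unfolding smooth_on_def
  proof (intro allI ballI)
    fix n x assume "x \<in> U"
    obtain h1 where "h1 \<in> S" "\<forall>x\<in>U. (deriv ^^ n) s x = h1 x" using key s by blast
    then show "(deriv ^^ n) s differentiable (at x)"
      using diff_transfer(1)[OF U \<open>x\<in>U\<close>] d \<open>x\<in>U\<close> by blast
  qed
qed

inductive_set ralg :: "(real \<Rightarrow> real) set \<Rightarrow> (real \<Rightarrow> real) set" for T where
  gen: "t \<in> T \<Longrightarrow> t \<in> ralg T"
| const: "(\<lambda>x. c) \<in> ralg T"
| add: "a \<in> ralg T \<Longrightarrow> b \<in> ralg T \<Longrightarrow> (\<lambda>x. a x + b x) \<in> ralg T"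
| mul: "a \<in> ralg T \<Longrightarrow> b \<in> ralg T \<Longrightarrow> (\<lambda>x. a x * b x) \<in> ralg T"

lemma ralg_smooth:
  assumes U: "open U" and T: "\<forall>t\<in>T. \<exists>h\<in>ralg T. \<forall>x\<in>U. DERIV t x :> h x"
    and s: "s \<in> ralg T"
  shows "smooth_on U s"
proof -
  have D: "\<exists>h\<in>ralg T. \<forall>x\<in>U. DERIV s x :> h x" if "s \<in> ralg T" for s
    using that
  proof (induction rule: ralg.induct)
    case (gen t) then show ?case using T by blast
  next
    case (const c) then show ?case using ralg.const[of 0 T] by (intro bexI[of _ "\<lambda>x. 0"]) (simp_all add: DERIV_const)
  next
    case (add a b)
    then obtain ha hb where "ha \<in> ralg T" "hb \<in> ralg T" "\<forall>x\<in>U. DERIV a x :> ha x" "\<forall>x\<in>U. DERIV b x :> hb x"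
      by blast
    moreover have "(\<lambda>x. ha x + hb x) \<in> ralg T" using ralg.add[OF \<open>ha \<in> ralg T\<close> \<open>hb \<in> ralg T\<close>] .
    ultimately show ?case by (intro bexI[of _ "\<lambda>x. ha x + hb x"]) (simp_all add: DERIV_add)
  next
    case (mul a b)
    then obtain ha hb where "ha \<in> ralg T" "hb \<in> ralg T" "\<forall>x\<in>U. DERIV a x :> ha x" "\<forall>x\<in>U. DERIV b x :> hb x"
      by blast
    moreover have "(\<lambda>x. ha x * b x + hb x * a x) \<in> ralg T"
      using ralg.add[OF ralg.mul[OF \<open>ha \<in> ralg T\<close> mul.hyps(2)] ralg.mul[OF \<open>hb \<in> ralg T\<close> mul.hyps(1)]] .
    ultimately show ?case by (intro bexI[of _ "\<lambda>x. ha x * b x + hb x * a x"]) (simp_all add: DERIV_mult)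
  qed
  show ?thesis
  proof (rule smooth_coind[OF U _ _ s])
    show "\<forall>s\<in>ralg T. \<forall>x\<in>U. s differentiable (at x)"
    proof (intro ballI)
      fix s x assume "s \<in> ralg T" "x \<in> U"
      then obtain h where "DERIV s x :> h x" using D by blast
      then show "s differentiable (at x)" unfolding real_differentiable_def by blast
    qed
    show "\<forall>s\<in>ralg T. \<exists>h\<in>ralg T. \<forall>x\<in>U. deriv s x = h x"
    proof
      fix s assume "s \<in> ralg T"
      then obtain h where "h \<in> ralg T" "\<forall>x\<in>U. DERIV s x :> h x" using D by blast
      then show "\<exists>h\<in>ralg T. \<forall>x\<in>U. deriv s x = h x" using DERIV_imp_deriv by blast
    qed
  qed
qed




lemma transport:
  fixes s :: real
  assumes se: "smooth_emb I J f"
    and I: "s - pi/2 < lo I" "hi I < s + pi/2" "lo I < hi I"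
    and J: "s - pi/2 < lo J" "hi J < s + pi/2" "lo J < hi J"
  shows "smooth_emb (tan (lo I - s), tan (hi I - s), ori I) (tan (lo J - s), tan (hi J - s), ori J)
           (\<lambda>x. tan (f (arctan x + s) - s))"
proof -
  obtain U0 g0 where U0: "open U0" "iset I \<subseteq> U0"
      and sm: "\<forall>n. \<forall>x\<in>U0. ((deriv ^^ n) g0) differentiable (at x)"
      and eq: "\<forall>x\<in>iset I. g0 x = f x"
      and sg: "\<forall>x\<in>iset I. if ori I = ori J then deriv g0 x > 0 else deriv g0 x < 0"
      and fJ: "\<forall>x\<in>iset I. f x \<in> iset J"
    using se unfolding smooth_emb_def by blast
  define I' where "I' = (tan (lo I - s), tan (hi I - s), ori I)"
  define J' where "J' = (tan (lo J - s), tan (hi J - s), ori J)"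
  define V where "V = (\<lambda>x. arctan x + s) -` U0"
  define c where "c = (\<lambda>x. cos (g0 (arctan x + s) - s))"
  define U1 where "U1 = c -` (- {0}) \<inter> V"
  have openV: "open V" unfolding V_def
    by (rule open_vimage[OF U0(1)]) (intro continuous_intros)
  have contg0: "isCont g0 y" if "y \<in> U0" for y
  proof -
    have "g0 differentiable (at y)" using sm that by (metis funpow_0)
    then show ?thesis by (rule differentiable_imp_continuous_within)
  qed
  have "continuous_on V c"
  proof (rule continuous_at_imp_continuous_on, rule ballI)
    fix x assume "x \<in> V"
    then have "isCont g0 (arctan x + s)" using contg0 V_def by auto
    moreover have "isCont (\<lambda>x. arctan x + s) x" by (intro continuous_intros)
    ultimately have "isCont (\<lambda>x. g0 (arctan x + s)) x" using isCont_o2 by blast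
    then show "isCont c x" unfolding c_def by (intro continuous_intros)
  qed
  then have openU1: "open U1" unfolding U1_def
    using continuous_on_open_vimage[OF openV] by blast
  define Tn where "Tn = (\<lambda>x. tan (g0 (arctan x + s) - s))"
  define r where "r = (\<lambda>x::real. inverse (1 + x\<^sup>2))"
  define G where "G = (\<lambda>k x. (deriv ^^ k) g0 (arctan x + s))"
  define T where "T = {(\<lambda>x. x), r, Tn} \<union> range G"
  have dG: "DERIV (G k) x :> G (Suc k) x * r x" if "x \<in> U1" for k x
  proof -
    have "(deriv ^^ k) g0 differentiable (at (arctan x + s))" using sm that U1_def V_def by auto
    then have "DERIV ((deriv ^^ k) g0) (arctan x + s) :> (deriv ^^ Suc k) g0 (arctan x + s)"
      using DERIV_deriv_iff_real_differentiable by simp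
    then show ?thesis unfolding G_def r_def
      by (auto intro!: derivative_eq_intros DERIV_chain2[where f="(deriv ^^ k) g0"])
  qed
  have dT: "DERIV Tn x :> (1 + Tn x * Tn x) * (G 1 x * r x)" if "x \<in> U1" for x
  proof -
    have cx: "cos (g0 (arctan x + s) - s) \<noteq> 0" using that U1_def c_def by auto
    have "DERIV (\<lambda>x. g0 (arctan x + s) - s) x :> G 1 x * r x"
      using dG[OF that, of 0] unfolding G_def by (auto intro!: derivative_eq_intros)
    from DERIV_chain2[OF DERIV_tan[OF cx] this]
    have "DERIV Tn x :> inverse ((cos (g0 (arctan x + s) - s))\<^sup>2) * (G 1 x * r x)"
      unfolding Tn_def .
    moreover have "inverse ((cos (g0 (arctan x + s) - s))\<^sup>2) = 1 + Tn x * Tn x"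
      using tan_sec[OF cx] unfolding Tn_def by (simp add: power2_eq_square power_inverse)
    ultimately show ?thesis by simp
  qed
  have dr: "DERIV r x :> (-2) * x * (r x * r x)" for x
  proof -
    have "0 < 1 + x\<^sup>2" by (intro add_pos_nonneg) simp_all
    then have "1 + x\<^sup>2 \<noteq> 0" by simp
    then show ?thesis unfolding r_def
      by (auto intro!: derivative_eq_intros simp: power2_eq_square field_simps)
  qed
  have gT: "t \<in> ralg T" if "t \<in> T" for t using that ralg.gen by blast
  have TD: "\<forall>t\<in>T. \<exists>h\<in>ralg T. \<forall>x\<in>U1. DERIV t x :> h x"
  proof
    fix t assume "t \<in> T"
    then consider "t = (\<lambda>x. x)" | "t = r" | "t = Tn" | k where "t = G k" unfolding T_def by blast
    then show "\<exists>h\<in>ralg T. \<forall>x\<in>U1. DERIV t x :> h x"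
    proof cases
      case 1 then show ?thesis using ralg.const[of 1 T] by (intro bexI[of _ "\<lambda>x. 1"]) (simp_all add: DERIV_ident)
    next
      case 2
      have i: "(\<lambda>x. x) \<in> ralg T" and rr: "r \<in> ralg T" by (auto simp: T_def intro: ralg.gen)
      have "(\<lambda>x. (-2) * x * (r x * r x)) \<in> ralg T"
        by (rule ralg.mul[OF ralg.mul[OF ralg.const[of "-2"] i] ralg.mul[OF rr rr]])
      then show ?thesis using dr unfolding 2 by (intro bexI[of _ "\<lambda>x. (-2) * x * (r x * r x)"]) simp_all
    next
      case 3
      have tt: "Tn \<in> ralg T" and rr: "r \<in> ralg T" and g1: "G 1 \<in> ralg T" by (auto simp: T_def intro: ralg.gen)
      have "(\<lambda>x. (1 + Tn x * Tn x) * (G 1 x * r x)) \<in> ralg T"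
        by (rule ralg.mul[OF ralg.add[OF ralg.const[of 1] ralg.mul[OF tt tt]] ralg.mul[OF g1 rr]])
      then show ?thesis using dT unfolding 3 by (intro bexI[of _ "\<lambda>x. (1 + Tn x * Tn x) * (G 1 x * r x)"]) simp_all
    next
      case (4 k)
      have rr: "r \<in> ralg T" and g1: "G (Suc k) \<in> ralg T" by (auto simp: T_def intro: ralg.gen)
      have "(\<lambda>x. G (Suc k) x * r x) \<in> ralg T"
        by (rule ralg.mul[OF g1 rr])
      then show ?thesis using dG unfolding 4 by (intro bexI[of _ "\<lambda>x. G (Suc k) x * r x"]) simp_all
    qed
  qed
  have smooth: "smooth_on U1 Tn"
    by (rule ralg_smooth[OF openU1 TD]) (simp add: T_def ralg.gen)
  have yI: "arctan x + s \<in> iset I" if "x \<in> iset I'" for x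
  proof -
    have a1: "arctan (tan (lo I - s)) = lo I - s" by (rule arctan_tan) (use I in auto)
    have a2: "arctan (tan (hi I - s)) = hi I - s" by (rule arctan_tan) (use I in auto)
    have "tan (lo I - s) \<le> x" "x \<le> tan (hi I - s)" using that by (auto simp: I'_def iset_def lo_def hi_def)
    then have "arctan (tan (lo I - s)) \<le> arctan x" "arctan x \<le> arctan (tan (hi I - s))"
      by (simp_all add: arctan_le_iff)
    then show ?thesis using a1 a2 by (simp add: iset_def)
  qed
  have jJ: "lo J \<le> f y \<and> f y \<le> hi J" if "y \<in> iset I" for y
    using fJ that by (auto simp: iset_def)
  have sub: "iset I' \<subseteq> U1"
  proof
    fix x assume x: "x \<in> iset I'"
    have y: "arctan x + s \<in> iset I" by (rule yI[OF x])
    then have "x \<in> V" using U0 V_def by auto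
    moreover have "g0 (arctan x + s) = f (arctan x + s)" using eq y by blast
    then have "cos (g0 (arctan x + s) - s) > 0" using jJ[OF y] J by (intro cos_gt_zero_pi) auto
    ultimately show "x \<in> U1" unfolding U1_def c_def by auto
  qed
  have "smooth_emb I' J' (\<lambda>x. tan (f (arctan x + s) - s))"
    unfolding smooth_emb_def
  proof (intro conjI exI[of _ U1] exI[of _ Tn] ballI)
    show "open U1" by (rule openU1)
    show "iset I' \<subseteq> U1" by (rule sub)
    show "\<forall>n. \<forall>x\<in>U1. (deriv ^^ n) Tn differentiable at x" using smooth unfolding smooth_on_def .
  next
    fix x assume x: "x \<in> iset I'"
    have y: "arctan x + s \<in> iset I" by (rule yI[OF x])
    show "Tn x = tan (f (arctan x + s) - s)" using eq y unfolding Tn_def by simp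
  next
    fix x assume x: "x \<in> iset I'"
    have y: "arctan x + s \<in> iset I" by (rule yI[OF x])
    have "deriv Tn x = (1 + Tn x * Tn x) * (G 1 x * r x)" using dT sub x by (blast intro: DERIV_imp_deriv)
    moreover have "G 1 x = deriv g0 (arctan x + s)" unfolding G_def by simp
    moreover have "r x > 0" unfolding r_def by (simp add: add_pos_nonneg)
    moreover have "1 + Tn x * Tn x > 0" by (simp add: add_pos_nonneg)
    moreover have "ori I' = ori I" "ori J' = ori J" by (simp_all add: I'_def J'_def ori_def)
    ultimately have e: "deriv Tn x = ((1 + Tn x * Tn x) * r x) * deriv g0 (arctan x + s)"
      and p: "0 < (1 + Tn x * Tn x) * r x" and oo: "ori I' = ori I" "ori J' = ori J" by simp_all
    show "if ori I' = ori J' then 0 < deriv Tn x else deriv Tn x < 0"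
    proof (cases "ori I = ori J")
      case True
      then have "deriv g0 (arctan x + s) > 0" using sg y by simp
      then show ?thesis using True oo e p by simp
    next
      case False
      then have "deriv g0 (arctan x + s) < 0" using sg y by simp
      then show ?thesis using False oo e p by (simp add: mult_pos_neg)
    qed
  next
    fix x assume x: "x \<in> iset I'"
    have y: "arctan x + s \<in> iset I" by (rule yI[OF x])
    have "tan (lo J - s) \<le> tan (f (arctan x + s) - s)" using jJ[OF y] J by (intro tan_mono_le) auto
    moreover have "tan (f (arctan x + s) - s) \<le> tan (hi J - s)" using jJ[OF y] J by (intro tan_mono_le) auto
    ultimately show "tan (f (arctan x + s) - s) \<in> iset J'" by (simp add: J'_def iset_def lo_def hi_def)
  qed
  then show ?thesis unfolding I'_def J'_def .
qed




lemma lo_simp[simp]: "lo (a, b, c) = a" and hi_simp[simp]: "hi (a, b, c) = b"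
  and ori_simp[simp]: "ori (a, b, c) = c"
  by (simp_all add: lo_def hi_def ori_def)

lemma ointv_eq: "(lo I, hi I, ori I) = I"
  by (simp add: lo_def hi_def ori_def)

lemma colour_simps:
  "colour_of t = Black \<longleftrightarrow> t < pi/2" "colour_of t = White \<longleftrightarrow> t > pi/2"
  "colour_of t = Special \<longleftrightarrow> t = pi/2"
  by (auto simp: colour_of_def)

lemma colour_B: "t < pi/2 \<Longrightarrow> colour_of t = Black" and colour_W: "t > pi/2 \<Longrightarrow> colour_of t = White"
  and colour_S: "colour_of (pi/2) = Special"
  and colour_B': "colour_of t = Black \<Longrightarrow> t < pi/2" and colour_W': "colour_of t = White \<Longrightarrow> t > pi/2"
  and colour_S': "colour_of t = Special \<Longrightarrow> t = pi/2"
  by (auto simp: colour_of_def split: if_splits)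

lemma smooth_emb_id:
  assumes "iset I \<subseteq> iset J" "ori I = ori J"
  shows "smooth_emb I J id"
proof -
  have "smooth_on UNIV (\<lambda>x. x)"
  proof (rule ralg_smooth[where T="{\<lambda>x. x}"])
    show "\<forall>t\<in>{\<lambda>x::real. x}. \<exists>h\<in>ralg {\<lambda>x. x}. \<forall>x\<in>UNIV. DERIV t x :> h x"
      using ralg.const[of 1] by (intro ballI bexI[of _ "\<lambda>x. 1"]) (simp_all add: DERIV_ident)
  qed (simp_all add: ralg.gen)
  then show ?thesis unfolding smooth_emb_def smooth_on_def using assms
    by (intro conjI exI[of _ UNIV] exI[of _ "\<lambda>x. x"]) auto
qed

lemma cb_hom_id:
  assumes "cb_obj I" "cb_obj J" "iset I \<subseteq> iset J" "ori I = ori J"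
  shows "cb_hom I J id"
  using assms smooth_emb_id unfolding cb_hom_def by auto

lemma cb_subint_hom: "cb_subint I K \<Longrightarrow> cb_hom I K id"
  unfolding cb_subint_def by (auto intro: cb_hom_id)

lemma smooth_emb_cong:
  assumes "smooth_emb I J f" "\<forall>t\<in>iset I. f t = f' t"
  shows "smooth_emb I J f'"
  using assms unfolding smooth_emb_def by auto

lemma cb_hom_cong:
  assumes "cb_hom I J f" "\<forall>t\<in>iset I. f t = f' t"
  shows "cb_hom I J f'"
  using assms smooth_emb_cong[of I J f f'] unfolding cb_hom_def by auto

lemma lo_in: "cb_obj I \<Longrightarrow> lo I \<in> iset I"
  and hi_in: "cb_obj I \<Longrightarrow> hi I \<in> iset I"
  by (auto simp: cb_obj_def iset_def)

lemma cb_cases: "cb_obj I \<Longrightarrow> is_white I \<or> is_black I \<or> is_gen I"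
  unfolding cb_obj_def is_white_def is_black_def is_gen_def by auto

lemma cb_excl: "\<not> (is_white I \<and> is_black I)" "\<not> (is_white I \<and> is_gen I)" "\<not> (is_black I \<and> is_gen I)"
  unfolding cb_obj_def is_white_def is_black_def is_gen_def by auto

lemma hom_white: assumes "cb_hom I J f" "is_white I" shows "\<not> is_black J"
proof
  assume b: "is_black J"
  have c: "cb_obj I" using assms by (simp add: is_white_def)
  have "colour_of (f (lo I)) = colour_of (lo I)" using assms lo_in[OF c] by (simp add: cb_hom_def)
  moreover have "colour_of (lo I) = White" using assms(2) by (simp add: is_white_def colour_simps)
  ultimately have "f (lo I) > pi/2" by (simp add: colour_simps)
  moreover have "f (lo I) \<in> iset J" using assms lo_in[OF c] by (simp add: cb_hom_def smooth_emb_def)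
  ultimately show False using b by (auto simp: is_black_def iset_def)
qed

lemma hom_black: assumes "cb_hom I J f" "is_black I" shows "\<not> is_white J"
proof
  assume b: "is_white J"
  have c: "cb_obj I" using assms by (simp add: is_black_def)
  have "colour_of (f (lo I)) = colour_of (lo I)" using assms lo_in[OF c] by (simp add: cb_hom_def)
  moreover have "colour_of (lo I) = Black" using assms(2) c by (simp add: is_black_def cb_obj_def colour_simps)
  ultimately have "f (lo I) < pi/2" by (simp add: colour_simps)
  moreover have "f (lo I) \<in> iset J" using assms lo_in[OF c] by (simp add: cb_hom_def smooth_emb_def)
  ultimately show False using b by (auto simp: is_white_def iset_def)
qed

lemma hom_gen_mid: assumes "cb_hom I J f" "is_gen I" shows "f (pi/2) = pi/2" "pi/2 \<in> iset J"
proof -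
  have m: "pi/2 \<in> iset I" using assms(2) by (auto simp: is_gen_def iset_def)
  have "colour_of (f (pi/2)) = colour_of (pi/2)" using assms m by (simp add: cb_hom_def)
  then show "f (pi/2) = pi/2" using colour_S colour_S' by metis
  moreover have "f (pi/2) \<in> iset J" using assms m by (simp add: cb_hom_def smooth_emb_def)
  ultimately show "pi/2 \<in> iset J" by metis
qed

lemma hom_gen: assumes "cb_hom I J f" "is_gen I" shows "is_gen J"
proof -
  have "pi/2 \<in> iset J" by (rule hom_gen_mid[OF assms])
  moreover have "cb_obj J" using assms by (simp add: cb_hom_def)
  ultimately show ?thesis by (auto simp: is_gen_def iset_def cb_obj_def)
qed

lemma gen_ori: assumes h: "cb_hom I J f" and g: "is_gen I" shows "ori I = ori J"
proof (rule ccontr)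
  assume ne: "ori I \<noteq> ori J"
  have c: "cb_obj I" using h by (simp add: cb_hom_def)
  obtain U0 g0 where U0: "open U0" "iset I \<subseteq> U0"
      and sm: "\<forall>n. \<forall>x\<in>U0. ((deriv ^^ n) g0) differentiable (at x)"
      and eq: "\<forall>x\<in>iset I. g0 x = f x"
      and sg: "\<forall>x\<in>iset I. if ori I = ori J then deriv g0 x > 0 else deriv g0 x < 0"
    using h unfolding cb_hom_def smooth_emb_def by blast
  have m: "pi/2 \<in> iset I" using g by (auto simp: is_gen_def iset_def)
  have l: "lo I < pi/2" using g by (simp add: is_gen_def)
  have "colour_of (f (lo I)) = colour_of (lo I)" using h lo_in[OF c] by (simp add: cb_hom_def)
  then have fl: "f (lo I) < pi/2" using l colour_B colour_B' by metis
  have fm: "f (pi/2) = pi/2" by (rule hom_gen_mid[OF h g])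
  have D: "DERIV g0 x :> deriv g0 x" if "lo I \<le> x \<and> x \<le> pi/2" for x
  proof -
    have "x \<in> iset I" using that m by (auto simp: iset_def)
    then have "g0 differentiable (at x)" using sm U0 by (metis funpow_0 subsetD)
    then show ?thesis by (simp only: DERIV_deriv_iff_real_differentiable)
  qed
  obtain z where z: "lo I < z" "z < pi/2" "g0 (pi/2) - g0 (lo I) = (pi/2 - lo I) * deriv g0 z"
    using MVT2[OF l, of g0 "deriv g0"] D by blast
  have "z \<in> iset I" using z m by (auto simp: iset_def)
  then have "deriv g0 z < 0" using sg ne by auto
  then have "(pi/2 - lo I) * deriv g0 z < 0" using l by (simp add: mult_pos_neg)
  moreover have "g0 (pi/2) - g0 (lo I) > 0" using eq m lo_in[OF c] fl fm by simp
  ultimately show False using z by simp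
qed

lemma phiW_white: "int_obj I \<Longrightarrow> is_white (phiW_obj I)"
  unfolding int_obj_def is_white_def cb_obj_def phiW_obj_def
  using arctan_bounded[of "lo I"] arctan_bounded[of "hi I"] arctan_less_iff[of "lo I" "hi I"]
  by auto

lemma phiB_black: "int_obj I \<Longrightarrow> is_black (phiB_obj I)"
  unfolding int_obj_def is_black_def cb_obj_def phiB_obj_def
  using arctan_bounded[of "lo I"] arctan_bounded[of "hi I"] arctan_less_iff[of "lo I" "hi I"]
  by auto

definition wpre :: "ointv \<Rightarrow> ointv" where "wpre I = (tan (lo I - pi), tan (hi I - pi), ori I)"
definition bpre :: "ointv \<Rightarrow> ointv" where "bpre I = (tan (lo I), tan (hi I), ori I)"

lemma wpre: assumes "is_white I" shows "int_obj (wpre I)" "phiW_obj (wpre I) = I"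
proof -
  have b: "pi/2 < lo I" "lo I < hi I" "hi I < 3*pi/2" using assms by (auto simp: is_white_def cb_obj_def)
  show "int_obj (wpre I)" unfolding int_obj_def wpre_def using b by (auto intro!: tan_monotone)
  have "arctan (tan (lo I - pi)) = lo I - pi" "arctan (tan (hi I - pi)) = hi I - pi"
    using b by (auto intro!: arctan_tan)
  then show "phiW_obj (wpre I) = I" unfolding phiW_obj_def wpre_def by (simp add: ointv_eq)
qed

lemma bpre: assumes "is_black I" shows "int_obj (bpre I)" "phiB_obj (bpre I) = I"
proof -
  have b: "-(pi/2) < lo I" "lo I < hi I" "hi I < pi/2" using assms by (auto simp: is_black_def cb_obj_def)
  show "int_obj (bpre I)" unfolding int_obj_def bpre_def using b by (auto intro!: tan_monotone)
  have "arctan (tan (lo I)) = lo I" "arctan (tan (hi I)) = hi I"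
    using b by (auto intro!: arctan_tan)
  then show "phiB_obj (bpre I) = I" unfolding phiB_obj_def bpre_def by (simp add: ointv_eq)
qed

lemma white_hom_phi:
  assumes h: "cb_hom I J f" and w: "is_white I" "is_white J"
  shows "\<exists>g. int_hom (wpre I) (wpre J) g \<and> (\<forall>t\<in>iset I. phiW_mor g t = f t)"
proof -
  have b: "pi - pi/2 < lo I" "hi I < pi + pi/2" "lo I < hi I"
    "pi - pi/2 < lo J" "hi J < pi + pi/2" "lo J < hi J"
    using w by (auto simp: is_white_def cb_obj_def)
  have se: "smooth_emb I J f" using h by (simp add: cb_hom_def)
  define g where "g = (\<lambda>x. tan (f (arctan x + pi) - pi))"
  have "smooth_emb (wpre I) (wpre J) g"
    using transport[OF se b] unfolding wpre_def g_def .
  then have "int_hom (wpre I) (wpre J) g" using wpre w by (simp add: int_hom_def)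
  moreover have "phiW_mor g t = f t" if t: "t \<in> iset I" for t
  proof -
    have tb: "lo I \<le> t" "t \<le> hi I" using t by (auto simp: iset_def)
    have "arctan (tan (t - pi)) = t - pi" using tb b by (intro arctan_tan) auto
    moreover have "f t \<in> iset J" using se t by (simp add: smooth_emb_def)
    then have "arctan (tan (f t - pi)) = f t - pi" using b by (intro arctan_tan) (auto simp: iset_def)
    ultimately show ?thesis unfolding phiW_mor_def g_def by simp
  qed
  ultimately show ?thesis by blast
qed

lemma black_hom_phi:
  assumes h: "cb_hom I J f" and w: "is_black I" "is_black J"
  shows "\<exists>g. int_hom (bpre I) (bpre J) g \<and> (\<forall>t\<in>iset I. phiB_mor g t = f t)"
proof -
  have b: "0 - pi/2 < lo I" "hi I < 0 + pi/2" "lo I < hi I"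
    "0 - pi/2 < lo J" "hi J < 0 + pi/2" "lo J < hi J"
    using w by (auto simp: is_black_def cb_obj_def)
  have se: "smooth_emb I J f" using h by (simp add: cb_hom_def)
  define g where "g = (\<lambda>x. tan (f (arctan x)))"
  have "smooth_emb (bpre I) (bpre J) g"
    using transport[OF se b] unfolding bpre_def g_def by simp
  then have "int_hom (bpre I) (bpre J) g" using bpre w by (simp add: int_hom_def)
  moreover have "phiB_mor g t = f t" if t: "t \<in> iset I" for t
  proof -
    have tb: "lo I \<le> t" "t \<le> hi I" using t by (auto simp: iset_def)
    have "arctan (tan t) = t" using tb b by (intro arctan_tan) auto
    moreover have "f t \<in> iset J" using se t by (simp add: smooth_emb_def)
    then have "arctan (tan (f t)) = f t" using b by (intro arctan_tan) (auto simp: iset_def)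
    ultimately show ?thesis unfolding phiB_mor_def g_def by simp
  qed
  ultimately show ?thesis by blast
qed




lemma op_simps[simp]:
  "acar (kalg_op X) = acar X" "azero (kalg_op X) = azero X" "aone (kalg_op X) = aone X"
  "aadd (kalg_op X) = aadd X" "asmult (kalg_op X) = asmult X" "amul (kalg_op X) x y = amul X y x"
  by (simp_all add: kalg_op_def)

lemma kalg_op_op[simp]: "kalg_op (kalg_op X) = X"
  by (simp add: kalg_op_def)

lemma kalgD:
  assumes "is_kalg X"
  shows kalg_one: "aone X \<in> acar X"
    and kalg_add_closed: "\<And>x y. x \<in> acar X \<Longrightarrow> y \<in> acar X \<Longrightarrow> aadd X x y \<in> acar X"
    and kalg_mul_closed: "\<And>x y. x \<in> acar X \<Longrightarrow> y \<in> acar X \<Longrightarrow> amul X x y \<in> acar X"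
    and kalg_smult_closed: "\<And>x c. x \<in> acar X \<Longrightarrow> asmult X c x \<in> acar X"
    and kalg_assoc: "\<And>x y z. x \<in> acar X \<Longrightarrow> y \<in> acar X \<Longrightarrow> z \<in> acar X \<Longrightarrow>
        amul X (amul X x y) z = amul X x (amul X y z)"
    and kalg_distl: "\<And>x y z. x \<in> acar X \<Longrightarrow> y \<in> acar X \<Longrightarrow> z \<in> acar X \<Longrightarrow>
        amul X x (aadd X y z) = aadd X (amul X x y) (amul X x z)"
    and kalg_distr: "\<And>x y z. x \<in> acar X \<Longrightarrow> y \<in> acar X \<Longrightarrow> z \<in> acar X \<Longrightarrow>
        amul X (aadd X x y) z = aadd X (amul X x z) (amul X y z)"
    and kalg_onel: "\<And>x. x \<in> acar X \<Longrightarrow> amul X (aone X) x = x"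
    and kalg_oner: "\<And>x. x \<in> acar X \<Longrightarrow> amul X x (aone X) = x"
    and kalg_smull: "\<And>x y c. x \<in> acar X \<Longrightarrow> y \<in> acar X \<Longrightarrow> asmult X c (amul X x y) = amul X (asmult X c x) y"
    and kalg_zero: "azero X \<in> acar X"
    and kalg_add_assoc: "\<And>x y z. x \<in> acar X \<Longrightarrow> y \<in> acar X \<Longrightarrow> z \<in> acar X \<Longrightarrow>
        aadd X (aadd X x y) z = aadd X x (aadd X y z)"
    and kalg_add_comm: "\<And>x y. x \<in> acar X \<Longrightarrow> y \<in> acar X \<Longrightarrow> aadd X x y = aadd X y x"
    and kalg_zero_l: "\<And>x. x \<in> acar X \<Longrightarrow> aadd X (azero X) x = x"
    and kalg_neg: "\<And>x. x \<in> acar X \<Longrightarrow> \<exists>y\<in>acar X. aadd X x y = azero X"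
    and kalg_sm1: "\<And>x y c. x \<in> acar X \<Longrightarrow> y \<in> acar X \<Longrightarrow> asmult X c (aadd X x y) = aadd X (asmult X c x) (asmult X c y)"
    and kalg_sm2: "\<And>x c d. x \<in> acar X \<Longrightarrow> asmult X (c + d) x = aadd X (asmult X c x) (asmult X d x)"
    and kalg_sm3: "\<And>x c d. x \<in> acar X \<Longrightarrow> asmult X (c * d) x = asmult X c (asmult X d x)"
    and kalg_sm4: "\<And>x. x \<in> acar X \<Longrightarrow> asmult X 1 x = x"
    and kalg_smulr: "\<And>x y c. x \<in> acar X \<Longrightarrow> y \<in> acar X \<Longrightarrow> asmult X c (amul X x y) = amul X x (asmult X c y)"
  using assms unfolding is_kalg_def by blast+

lemma is_kalg_op:
  assumes A: "is_kalg X" shows "is_kalg (kalg_op X)"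
  unfolding is_kalg_def op_simps
proof (intro conjI ballI allI)
qed (use kalgD[OF A] in metis)+

lemma hom_op_dom:
  assumes "kalg_hom X Y h" "kalg_comm X" shows "kalg_hom (kalg_op X) Y h"
proof -
  have c: "amul X y x = amul X x y" if "x \<in> acar X" "y \<in> acar X" for x y
    using assms(2) that unfolding kalg_comm_def by blast
  note H = assms(1)[unfolded kalg_hom_def]
  show ?thesis unfolding kalg_hom_def op_simps
  proof (intro conjI ballI allI)
    fix x y assume xy: "x \<in> acar X" "y \<in> acar X"
    have "h (amul X y x) = h (amul X x y)" using c[OF xy] by simp
    also have "\<dots> = amul Y (h x) (h y)" using H xy by blast
    finally show "h (amul X y x) = amul Y (h x) (h y)" .
  qed (use H in blast)+
qed

lemma hom_op_cod:
  assumes "kalg_hom X Y h" "\<forall>x\<in>acar X. h x \<in> kalg_center Y" shows "kalg_hom X (kalg_op Y) h"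
proof -
  note H = assms(1)[unfolded kalg_hom_def]
  show ?thesis unfolding kalg_hom_def op_simps
  proof (intro conjI ballI allI)
    fix x y assume xy: "x \<in> acar X" "y \<in> acar X"
    have "h (amul X x y) = amul Y (h x) (h y)" using H xy by blast
    also have "\<dots> = amul Y (h y) (h x)" using assms(2) xy H unfolding kalg_center_def by blast
    finally show "h (amul X x y) = amul Y (h y) (h x)" .
  qed (use H in blast)+
qed

lemma center_op[simp]: "kalg_center (kalg_op Y) = kalg_center Y"
  unfolding kalg_center_def by auto

lemma lc_net_simps[simp]: "acar (lc_net_obj X I) = acar X" "aone (lc_net_obj X I) = aone X"
  by (simp_all add: lc_net_obj_def)

lemma is_kalg_lc: "is_kalg X \<Longrightarrow> is_kalg (lc_net_obj X I)"
  by (simp add: lc_net_obj_def is_kalg_op)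

lemma comm_center: "kalg_comm X \<Longrightarrow> kalg_center X = acar X"
  unfolding kalg_comm_def kalg_center_def by auto

lemma hom_lc:
  assumes "kalg_hom X Y h" "kalg_comm X" "\<forall>x\<in>acar X. h x \<in> kalg_center Y"
  shows "kalg_hom (lc_net_obj X I) (lc_net_obj Y J) h"
  using assms hom_op_dom hom_op_cod[of X Y h] hom_op_cod[of "kalg_op X" Y h]
  unfolding lc_net_obj_def by auto

lemma hom_id: "kalg_hom X X (\<lambda>x. x)"
  unfolding kalg_hom_def by simp

lemma hom_id_lc:
  assumes "kalg_comm X" shows "kalg_hom (lc_net_obj X I) (lc_net_obj X J) (\<lambda>x. x)"
  using hom_lc[OF hom_id assms] comm_center[OF assms] by simp

lemma lc_net_ori: "ori I = ori J \<Longrightarrow> lc_net_obj X I = lc_net_obj X J"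
  by (simp add: lc_net_obj_def)

lemma lc_net_irev: "lc_net_obj X (irev I) = kalg_op (lc_net_obj X I)"
  by (simp add: lc_net_obj_def irev_def)

lemma center_mul:
  assumes "is_kalg X" "a \<in> kalg_center X" "b \<in> kalg_center X"
  shows "amul X a b \<in> kalg_center X"
proof -
  have a: "a \<in> acar X" "\<forall>x\<in>acar X. amul X a x = amul X x a" and b: "b \<in> acar X" "\<forall>x\<in>acar X. amul X b x = amul X x b"
    using assms unfolding kalg_center_def by auto
  have "amul X (amul X a b) x = amul X x (amul X a b)" if x: "x \<in> acar X" for x
  proof -
    have "amul X (amul X a b) x = amul X a (amul X b x)" using kalg_assoc[OF assms(1) a(1) b(1) x] .
    also have "\<dots> = amul X a (amul X x b)" using b x by simp
    also have "\<dots> = amul X (amul X a x) b" using kalg_assoc[OF assms(1) a(1) x b(1)] by simp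
    also have "\<dots> = amul X (amul X x a) b" using a x by simp
    also have "\<dots> = amul X x (amul X a b)" using kalg_assoc[OF assms(1) x a(1) b(1)] by simp
    finally show ?thesis .
  qed
  then show ?thesis unfolding kalg_center_def using kalg_mul_closed[OF assms(1) a(1) b(1)] by auto
qed

lemma tensor_from_maps:
  assumes D: "is_kalg D" and A: "is_kalg A" and B: "is_kalg B"
    and hW: "kalg_hom A D W" and hB: "kalg_hom B D V"
    and cW: "\<forall>a\<in>acar A. W a \<in> kalg_center D" and cB: "\<forall>b\<in>acar B. V b \<in> kalg_center D"
  shows "tensor_center_hom A B D (\<lambda>a b. amul D (W a) (V b))"
proof -
  have Wc: "W a \<in> acar D" if "a \<in> acar A" for a using hW that by (simp add: kalg_hom_def)
  have Vc: "V b \<in> acar D" if "b \<in> acar B" for b using hB that by (simp add: kalg_hom_def)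
  have Wz: "amul D (W a) x = amul D x (W a)" if "a \<in> acar A" "x \<in> acar D" for a x
    using cW that by (auto simp: kalg_center_def)
  have Vz: "amul D (V b) x = amul D x (V b)" if "b \<in> acar B" "x \<in> acar D" for b x
    using cB that by (auto simp: kalg_center_def)
  note hWd = hW[unfolded kalg_hom_def] and hBd = hB[unfolded kalg_hom_def]
  show ?thesis unfolding tensor_center_hom_def
  proof (intro conjI ballI allI)
    fix a b assume "a \<in> acar A" "b \<in> acar B"
    then show "amul D (W a) (V b) \<in> kalg_center D" using center_mul[OF D] cW cB by blast
  next
    fix a a' b assume ab: "a \<in> acar A" "a' \<in> acar A" "b \<in> acar B"
    then show "amul D (W (aadd A a a')) (V b) = aadd D (amul D (W a) (V b)) (amul D (W a') (V b))"
      using hWd kalg_distr[OF D Wc Wc Vc] by simp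
  next
    fix a b b' assume ab: "a \<in> acar A" "b \<in> acar B" "b' \<in> acar B"
    then show "amul D (W a) (V (aadd B b b')) = aadd D (amul D (W a) (V b)) (amul D (W a) (V b'))"
      using hBd kalg_distl[OF D Wc Vc Vc] by simp
  next
    fix c a b assume ab: "a \<in> acar A" "b \<in> acar B"
    then show "amul D (W (asmult A c a)) (V b) = asmult D c (amul D (W a) (V b))"
      using hWd kalg_smull[OF D Wc Vc] by simp
    show "amul D (W a) (V (asmult B c b)) = asmult D c (amul D (W a) (V b))"
      using ab hBd kalg_smulr[OF D Wc Vc] by simp
  next
    fix a a' b b' assume ab: "a \<in> acar A" "a' \<in> acar A" "b \<in> acar B" "b' \<in> acar B"
    have "amul D (W (amul A a a')) (V (amul B b b')) = amul D (amul D (W a) (W a')) (amul D (V b) (V b'))"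
      using ab hWd hBd by simp
    also have "\<dots> = amul D (W a) (amul D (W a') (amul D (V b) (V b')))"
      using kalg_assoc[OF D] Wc Vc kalg_mul_closed[OF D] ab by simp
    also have "\<dots> = amul D (W a) (amul D (amul D (W a') (V b)) (V b'))"
      using kalg_assoc[OF D] Wc Vc ab by simp
    also have "\<dots> = amul D (W a) (amul D (amul D (V b) (W a')) (V b'))"
      using Wz Vc ab by simp
    also have "\<dots> = amul D (W a) (amul D (V b) (amul D (W a') (V b')))"
      using kalg_assoc[OF D] Wc Vc ab by simp
    also have "\<dots> = amul D (amul D (W a) (V b)) (amul D (W a') (V b'))"
      using kalg_assoc[OF D] Wc Vc kalg_mul_closed[OF D] ab by simp
    finally show "amul D (W (amul A a a')) (V (amul B b b')) = amul D (amul D (W a) (V b)) (amul D (W a') (V b'))" .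
  next
    show "amul D (W (aone A)) (V (aone B)) = aone D"
      using hWd hBd kalg_onel[OF D kalg_one[OF D]] by simp
  qed
qed

lemma tensor_unique:
  assumes D: "is_kalg D" and A: "is_kalg A" and B: "is_kalg B" and t: "tensor_center_hom A B D \<phi>"
    and a: "a \<in> acar A" and b: "b \<in> acar B"
  shows "\<phi> a b = amul D (\<phi> a (aone B)) (\<phi> (aone A) b)"
proof -
  have "\<phi> a b = \<phi> (amul A a (aone A)) (amul B (aone B) b)"
    using kalg_oner[OF A a] kalg_onel[OF B b] by simp
  also have "\<dots> = amul D (\<phi> a (aone B)) (\<phi> (aone A) b)"
    using t a b kalg_one[OF A] kalg_one[OF B] unfolding tensor_center_hom_def by blast
  finally show ?thesis .
qed

lemma tensor_left_hom:
  assumes D: "is_kalg D" and A: "is_kalg A" and B: "is_kalg B" and t: "tensor_center_hom A B D \<phi>"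
  shows "kalg_hom A D (\<lambda>a. \<phi> a (aone B))" "\<forall>a\<in>acar A. \<phi> a (aone B) \<in> kalg_center D"
proof -
  note T = t[unfolded tensor_center_hom_def]
  have o: "aone B \<in> acar B" by (rule kalg_one[OF B])
  have oo: "amul B (aone B) (aone B) = aone B" by (rule kalg_onel[OF B o])
  show "\<forall>a\<in>acar A. \<phi> a (aone B) \<in> kalg_center D" using T o by blast
  then show "kalg_hom A D (\<lambda>a. \<phi> a (aone B))" unfolding kalg_hom_def kalg_center_def
    using T o oo by (metis (no_types, lifting) mem_Collect_eq)
qed

lemma tensor_right_hom:
  assumes D: "is_kalg D" and A: "is_kalg A" and B: "is_kalg B" and t: "tensor_center_hom A B D \<phi>"
  shows "kalg_hom B D (\<lambda>b. \<phi> (aone A) b)" "\<forall>b\<in>acar B. \<phi> (aone A) b \<in> kalg_center D"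
proof -
  note T = t[unfolded tensor_center_hom_def]
  have o: "aone A \<in> acar A" by (rule kalg_one[OF A])
  have oo: "amul A (aone A) (aone A) = aone A" by (rule kalg_onel[OF A o])
  show "\<forall>b\<in>acar B. \<phi> (aone A) b \<in> kalg_center D" using T o by blast
  then show "kalg_hom B D (\<lambda>b. \<phi> (aone A) b)" unfolding kalg_hom_def kalg_center_def
    using T o oo by (metis (no_types, lifting) mem_Collect_eq)
qed




lemmas ldD0 = lc_defect_def[THEN iffD1]
lemmas ld_kalg = ldD0[THEN conjunct1]
lemmas ld_hom = ldD0[THEN conjunct2, THEN conjunct1]
lemmas ld_cong = ldD0[THEN conjunct2, THEN conjunct2, THEN conjunct1]
lemmas ld_id = ldD0[THEN conjunct2, THEN conjunct2, THEN conjunct2, THEN conjunct1]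
lemmas ld_comp = ldD0[THEN conjunct2, THEN conjunct2, THEN conjunct2, THEN conjunct2, THEN conjunct1]
lemmas ld_op = ldD0[THEN conjunct2, THEN conjunct2, THEN conjunct2, THEN conjunct2, THEN conjunct2, THEN conjunct1]
lemmas ld_phiob = ldD0[THEN conjunct2, THEN conjunct2, THEN conjunct2, THEN conjunct2, THEN conjunct2, THEN conjunct2, THEN conjunct1]
lemmas ld_phimor = ldD0[THEN conjunct2, THEN conjunct2, THEN conjunct2, THEN conjunct2, THEN conjunct2, THEN conjunct2, THEN conjunct2, THEN conjunct1]
lemmas ld_iso = ldD0[THEN conjunct2, THEN conjunct2, THEN conjunct2, THEN conjunct2, THEN conjunct2, THEN conjunct2, THEN conjunct2, THEN conjunct2, THEN conjunct1]
lemmas ld_loc = ldD0[THEN conjunct2, THEN conjunct2, THEN conjunct2, THEN conjunct2, THEN conjunct2, THEN conjunct2, THEN conjunct2, THEN conjunct2, THEN conjunct2, THEN conjunct1]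
lemmas ld_sa = ldD0[THEN conjunct2, THEN conjunct2, THEN conjunct2, THEN conjunct2, THEN conjunct2, THEN conjunct2, THEN conjunct2, THEN conjunct2, THEN conjunct2, THEN conjunct2, THEN conjunct1]
lemmas ld_lc = ldD0[THEN conjunct2, THEN conjunct2, THEN conjunct2, THEN conjunct2, THEN conjunct2, THEN conjunct2, THEN conjunct2, THEN conjunct2, THEN conjunct2, THEN conjunct2, THEN conjunct2, THEN conjunct1]
lemmas ld_cw = ldD0[THEN conjunct2, THEN conjunct2, THEN conjunct2, THEN conjunct2, THEN conjunct2, THEN conjunct2, THEN conjunct2, THEN conjunct2, THEN conjunct2, THEN conjunct2, THEN conjunct2, THEN conjunct2, THEN conjunct1]
lemmas ld_cb = ldD0[THEN conjunct2, THEN conjunct2, THEN conjunct2, THEN conjunct2, THEN conjunct2, THEN conjunct2, THEN conjunct2, THEN conjunct2, THEN conjunct2, THEN conjunct2, THEN conjunct2, THEN conjunct2, THEN conjunct2]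

lemma num_facts:
  shows "cb_obj I0" "is_gen I0" "is_white W0" "is_black B0"
    "is_gen (pi/4, 5*pi/8, True)" "is_gen (3*pi/8, 3*pi/4, True)"
    "cb_subint W0 I0" "cb_subint B0 I0" "cb_subint (pi/4, 5*pi/8, True) I0" "cb_subint (3*pi/8, 3*pi/4, True) I0"
    "iint W0 \<inter> iint (pi/4, 5*pi/8, True) = {}" "iint B0 \<inter> iint (3*pi/8, 3*pi/4, True) = {}"
    "ori I0" "ori W0" "ori B0"
  using pi_gt_zero
  by (auto simp: cb_obj_def is_gen_def is_white_def is_black_def cb_subint_def iint_def iset_def I0_def W0_def B0_def)

lemma gen_sub: "is_gen I \<Longrightarrow> cb_obj I" and white_sub: "is_white I \<Longrightarrow> cb_obj I"
  and black_sub: "is_black I \<Longrightarrow> cb_obj I"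
  by (simp_all add: is_gen_def is_white_def is_black_def)

lemma Dob_white:
  assumes L: "lc_defect A B Dob Dmor" and w: "is_white I" shows "Dob I = lc_net_obj A I"
proof -
  have "Dob (phiW_obj (wpre I)) = lc_net_obj A (wpre I)" using ld_phiob[OF L] wpre(1)[OF w] by blast
  then show ?thesis using wpre(2)[OF w] lc_net_ori[of "wpre I" I A] by (simp add: wpre_def)
qed

lemma Dob_black:
  assumes L: "lc_defect A B Dob Dmor" and w: "is_black I" shows "Dob I = lc_net_obj B I"
proof -
  have "Dob (phiB_obj (bpre I)) = lc_net_obj B (bpre I)" using ld_phiob[OF L] bpre(1)[OF w] by blast
  then show ?thesis using bpre(2)[OF w] lc_net_ori[of "bpre I" I B] by (simp add: bpre_def)
qed

lemma part1:
  assumes A: "is_kalg A" and B: "is_kalg B" and L: "lc_defect A B Dob Dmor"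
  shows "is_kalg (Dob I0) \<and>
        (\<exists>\<phi>. tensor_center_hom A B (Dob I0) \<phi> \<and> corresponds A B Dob Dmor (Dob I0) \<phi>) \<and>
        (\<forall>\<phi> \<psi>. tensor_center_hom A B (Dob I0) \<phi> \<and> corresponds A B Dob Dmor (Dob I0) \<phi> \<and>
                 tensor_center_hom A B (Dob I0) \<psi> \<and> corresponds A B Dob Dmor (Dob I0) \<psi> \<longrightarrow>
                 (\<forall>a\<in>acar A. \<forall>b\<in>acar B. \<phi> a b = \<psi> a b))"
proof -
  define D where "D = Dob I0"
  define G1 where "G1 = (pi/4, 5*pi/8, True)"
  define G2 where "G2 = (3*pi/8, 3*pi/4, True)"
  note nf = num_facts[folded G1_def G2_def]
  have Dk: "is_kalg D" using ld_kalg[OF L] nf unfolding D_def by blast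
  have DW: "Dob W0 = A" using Dob_white[OF L nf(3)] nf by (simp add: lc_net_obj_def)
  have DB: "Dob B0 = B" using Dob_black[OF L nf(4)] nf by (simp add: lc_net_obj_def)
  have hW: "cb_hom W0 I0 id" using cb_subint_hom nf by blast
  have hB: "cb_hom B0 I0 id" using cb_subint_hom nf by blast
  have hG1: "cb_hom G1 I0 id" using cb_subint_hom nf by blast
  have hG2: "cb_hom G2 I0 id" using cb_subint_hom nf by blast
  have oG1: "ori G1 = ori I0" "ori G2 = ori I0" using nf by (simp_all add: G1_def G2_def)
  have lG1: "Dob I0 = Dob G1 \<and> is_identity_on (Dob G1) (Dmor G1 I0 id)"
    using ld_lc[OF L] hG1 oG1 nf by blast
  have lG2: "Dob I0 = Dob G2 \<and> is_identity_on (Dob G2) (Dmor G2 I0 id)"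
    using ld_lc[OF L] hG2 oG1 nf by blast
  define W where "W = Dmor W0 I0 id"
  define V where "V = Dmor B0 I0 id"
  have kW: "kalg_hom A D W" using ld_hom[OF L] hW DW unfolding W_def D_def by metis
  have kB: "kalg_hom B D V" using ld_hom[OF L] hB DB unfolding V_def D_def by metis
  have cW: "\<forall>a\<in>acar A. W a \<in> kalg_center D"
  proof
    fix a assume a: "a \<in> acar A"
    have loc: "\<forall>x\<in>acar (Dob W0). \<forall>y\<in>acar (Dob G1). amul (Dob I0) (Dmor W0 I0 id x) (Dmor G1 I0 id y) =
           amul (Dob I0) (Dmor G1 I0 id y) (Dmor W0 I0 id x)"
      using ld_loc[OF L] nf by blast
    have "amul D (W a) y = amul D y (W a)" if y: "y \<in> acar D" for y
    proof -
      have "Dmor G1 I0 id y = y" using lG1 y unfolding is_identity_on_def D_def by metis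
      moreover have "y \<in> acar (Dob G1)" using lG1 y D_def by metis
      ultimately show ?thesis using loc a DW unfolding W_def D_def by metis
    qed
    moreover have "W a \<in> acar D" using kW a by (simp add: kalg_hom_def)
    ultimately show "W a \<in> kalg_center D" unfolding kalg_center_def by blast
  qed
  have cB: "\<forall>b\<in>acar B. V b \<in> kalg_center D"
  proof
    fix b assume b: "b \<in> acar B"
    have loc: "\<forall>x\<in>acar (Dob B0). \<forall>y\<in>acar (Dob G2). amul (Dob I0) (Dmor B0 I0 id x) (Dmor G2 I0 id y) =
           amul (Dob I0) (Dmor G2 I0 id y) (Dmor B0 I0 id x)"
      using ld_loc[OF L] nf by blast
    have "amul D (V b) y = amul D y (V b)" if y: "y \<in> acar D" for y
    proof -
      have "Dmor G2 I0 id y = y" using lG2 y unfolding is_identity_on_def D_def by metis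
      moreover have "y \<in> acar (Dob G2)" using lG2 y D_def by metis
      ultimately show ?thesis using loc b DB unfolding V_def D_def by metis
    qed
    moreover have "V b \<in> acar D" using kB b by (simp add: kalg_hom_def)
    ultimately show "V b \<in> kalg_center D" unfolding kalg_center_def by blast
  qed
  define \<phi> where "\<phi> = (\<lambda>a b. amul D (W a) (V b))"
  have t: "tensor_center_hom A B D \<phi>" unfolding \<phi>_def by (rule tensor_from_maps[OF Dk A B kW kB cW cB])
  have W1: "V (aone B) = aone D" "W (aone A) = aone D" using kW kB by (simp_all add: kalg_hom_def)
  have Wc: "W a \<in> acar D" if "a \<in> acar A" for a using kW that by (simp add: kalg_hom_def)
  have Vc: "V b \<in> acar D" if "b \<in> acar B" for b using kB that by (simp add: kalg_hom_def)
  have corr: "corresponds A B Dob Dmor D \<phi>"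
    unfolding corresponds_def \<phi>_def
    using W1 kalg_oner[OF Dk Wc] kalg_onel[OF Dk Vc] by (simp add: D_def W_def V_def)
  have uniq: "\<phi>' a b = \<psi>' a b"
    if "tensor_center_hom A B D \<phi>'" "corresponds A B Dob Dmor D \<phi>'"
       "tensor_center_hom A B D \<psi>'" "corresponds A B Dob Dmor D \<psi>'" "a \<in> acar A" "b \<in> acar B"
    for \<phi>' \<psi>' a b
  proof -
    have "\<phi>' a b = amul D (\<phi>' a (aone B)) (\<phi>' (aone A) b)" by (rule tensor_unique[OF Dk A B that(1,5,6)])
    also have "\<dots> = amul D (\<psi>' a (aone B)) (\<psi>' (aone A) b)"
      using that(2,4,5,6) unfolding corresponds_def by metis
    also have "\<dots> = \<psi>' a b" by (rule tensor_unique[OF Dk A B that(3,5,6), symmetric])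
    finally show ?thesis .
  qed
  show ?thesis using Dk t corr uniq unfolding D_def by blast
qed




definition stdOb :: "('u, 'k) kalg \<Rightarrow> ('u, 'k) kalg \<Rightarrow> ('u, 'k) kalg \<Rightarrow> ointv \<Rightarrow> ('u, 'k) kalg" where
  "stdOb A B D I = (if is_white I then lc_net_obj A I else if is_black I then lc_net_obj B I else lc_net_obj D I)"

lemma irev_irev[simp]: "irev (irev I) = I"
  by (simp add: irev_def ointv_eq)

lemma irev_simps[simp]: "lo (irev I) = lo I" "hi (irev I) = hi I" "ori (irev I) = (\<not> ori I)"
  "iset (irev I) = iset I" "iint (irev I) = iint I"
  by (simp_all add: irev_def iset_def iint_def)

lemma irev_class[simp]: "cb_obj (irev I) = cb_obj I" "is_white (irev I) = is_white I"
  "is_black (irev I) = is_black I" "is_gen (irev I) = is_gen I"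
  by (simp_all add: cb_obj_def is_white_def is_black_def is_gen_def)

lemma Dob_genpos:
  assumes L: "lc_defect A B Dob Dmor" and g: "is_gen I" and o: "ori I"
  shows "Dob I = Dob I0"
proof -
  define K where "K = (max (lo I) (pi/4), min (hi I) (3*pi/4), True)"
  have b: "-(pi/2) < lo I" "lo I < pi/2" "pi/2 < hi I" "hi I < 3*pi/2"
    using g by (auto simp: is_gen_def cb_obj_def)
  have gK: "is_gen K" using b pi_gt_zero by (auto simp: K_def is_gen_def cb_obj_def)
  have hK: "cb_hom K I id" using gK g o
    by (intro cb_hom_id) (auto simp: K_def iset_def gen_sub)
  have hK0: "cb_hom K I0 id" using gK num_facts
    by (intro cb_hom_id) (auto simp: K_def iset_def gen_sub I0_def)
  have oK: "ori K = ori I" "ori K = ori I0" using o num_facts by (simp_all add: K_def)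
  have "Dob I = Dob K" using ld_lc[OF L, rule_format, of K I id] hK gK g oK by blast
  moreover have "Dob I0 = Dob K" using ld_lc[OF L, rule_format, of K I0 id] hK0 gK num_facts oK by blast
  ultimately show ?thesis by simp
qed

lemma Dob_gen:
  assumes L: "lc_defect A B Dob Dmor" and g: "is_gen I"
  shows "Dob I = lc_net_obj (Dob I0) I"
proof (cases "ori I")
  case True then show ?thesis using Dob_genpos[OF L g] by (simp add: lc_net_obj_def)
next
  case False
  have "Dob (irev I) = Dob I0" using Dob_genpos[OF L] g False by simp
  moreover have "cb_obj (irev I)" using g gen_sub by simp
  then have "Dob (irev (irev I)) = kalg_op (Dob (irev I))" by (rule ld_op[OF L, rule_format])
  ultimately show ?thesis using False by (simp add: lc_net_obj_def)
qed

lemma charDob: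
  assumes L: "lc_defect A B Dob Dmor" and c: "cb_obj I"
  shows "Dob I = stdOb A B (Dob I0) I"
proof -
  consider "is_white I" | "is_black I" | "is_gen I" using cb_cases[OF c] by blast
  then show ?thesis
  proof cases
    case 1 then show ?thesis using Dob_white[OF L 1] unfolding stdOb_def by simp
  next
    case 2 then show ?thesis using Dob_black[OF L 2] cb_excl[of I] unfolding stdOb_def by simp
  next
    case 3 then show ?thesis using Dob_gen[OF L 3] cb_excl[of I] unfolding stdOb_def by simp
  qed
qed

lemma charDmor:
  assumes L: "lc_defect A B Dob Dmor" and h: "cb_hom I J f" and x: "x \<in> acar (Dob I)"
  shows "Dmor I J f x = (if is_white I \<and> is_gen J then Dmor W0 I0 id x
                          else if is_black I \<and> is_gen J then Dmor B0 I0 id x else x)"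
proof -
  have cI: "cb_obj I" and cJ: "cb_obj J" using h by (simp_all add: cb_hom_def)
  have hW: "cb_hom W0 I0 id" using cb_subint_hom num_facts by blast
  have hB: "cb_hom B0 I0 id" using cb_subint_hom num_facts by blast
  consider "is_white I" | "is_black I" | "is_gen I" using cb_cases[OF cI] by blast
  then show ?thesis
  proof cases
    case 1
    then consider "is_white J" | "is_gen J" using hom_white[OF h] cb_cases[OF cJ] by blast
    then show ?thesis
    proof cases
      case 2
      have "Dmor I J f x = Dmor W0 I0 id x" using ld_cw[OF L] h hW 1 2 num_facts x by blast
      then show ?thesis using 1 2 by simp
    next
      case w: 1
      obtain g where g: "int_hom (wpre I) (wpre J) g" "\<forall>t\<in>iset I. phiW_mor g t = f t"
        using white_hom_phi[OF h 1 w] by blast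
      have "is_identity_on (Dob (phiW_obj (wpre I))) (Dmor (phiW_obj (wpre I)) (phiW_obj (wpre J)) (phiW_mor g))"
        using ld_phimor[OF L] g(1) by blast
      then have e1: "Dmor I J (phiW_mor g) x = x" using wpre(2)[OF 1] wpre(2)[OF w] x
        by (simp add: is_identity_on_def)
      have h2: "cb_hom I J (phiW_mor g)" using cb_hom_cong[OF h] g(2) by simp
      have "Dmor I J f x = Dmor I J (phiW_mor g) x"
        using ld_cong[OF L, rule_format, of I J f "phiW_mor g" x] h h2 g(2) x by simp
      then show ?thesis using e1 1 w cb_excl[of I] cb_excl[of J] by simp
    qed
  next
    case 2
    then consider "is_black J" | "is_gen J" using hom_black[OF h] cb_cases[OF cJ] by blast
    then show ?thesis
    proof cases
      case g2: 2
      have "Dmor I J f x = Dmor B0 I0 id x" using ld_cb[OF L] h hB 2 g2 num_facts x by blast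
      then show ?thesis using 2 g2 cb_excl[of I] by simp
    next
      case w: 1
      obtain g where g: "int_hom (bpre I) (bpre J) g" "\<forall>t\<in>iset I. phiB_mor g t = f t"
        using black_hom_phi[OF h 2 w] by blast
      have "is_identity_on (Dob (phiB_obj (bpre I))) (Dmor (phiB_obj (bpre I)) (phiB_obj (bpre J)) (phiB_mor g))"
        using ld_phimor[OF L] g(1) by blast
      then have e1: "Dmor I J (phiB_mor g) x = x" using bpre(2)[OF 2] bpre(2)[OF w] x
        by (simp add: is_identity_on_def)
      have h2: "cb_hom I J (phiB_mor g)" using cb_hom_cong[OF h] g(2) by simp
      have "Dmor I J f x = Dmor I J (phiB_mor g) x"
        using ld_cong[OF L, rule_format, of I J f "phiB_mor g" x] h h2 g(2) x by simp
      then show ?thesis using e1 2 w cb_excl[of I] cb_excl[of J] by simp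
    qed
  next
    case 3
    have gJ: "is_gen J" by (rule hom_gen[OF h 3])
    have "ori I = ori J" by (rule gen_ori[OF h 3])
    then have "is_identity_on (Dob I) (Dmor I J f)" using ld_lc[OF L] h 3 gJ by blast
    then show ?thesis using x 3 cb_excl[of I] by (simp add: is_identity_on_def)
  qed
qed

lemma part3:
  assumes L: "lc_defect A B Dob Dmor" and L': "lc_defect A B Dob' Dmor'"
    and c: "corresponds A B Dob Dmor D \<phi>" and c': "corresponds A B Dob' Dmor' D \<phi>"
  shows "(\<forall>I. cb_obj I \<longrightarrow> Dob I = Dob' I) \<and>
        (\<forall>I J f. cb_hom I J f \<longrightarrow> (\<forall>x\<in>acar (Dob I). Dmor I J f x = Dmor' I J f x))"
proof -
  have D0: "Dob I0 = Dob' I0" using c c' by (simp add: corresponds_def)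
  have ob: "Dob I = Dob' I" if "cb_obj I" for I
    using charDob[OF L that] charDob[OF L' that] D0 by simp
  have "Dmor I J f x = Dmor' I J f x" if h: "cb_hom I J f" and x: "x \<in> acar (Dob I)" for I J f x
  proof -
    have cI: "cb_obj I" using h by (simp add: cb_hom_def)
    have x': "x \<in> acar (Dob' I)" using x ob[OF cI] by simp
    have e: "Dmor I J f x = (if is_white I \<and> is_gen J then Dmor W0 I0 id x
                          else if is_black I \<and> is_gen J then Dmor B0 I0 id x else x)"
      by (rule charDmor[OF L h x])
    have e': "Dmor' I J f x = (if is_white I \<and> is_gen J then Dmor' W0 I0 id x
                          else if is_black I \<and> is_gen J then Dmor' B0 I0 id x else x)"
      by (rule charDmor[OF L' h x'])
    show ?thesis
    proof (cases "is_white I")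
      case True
      then have "x \<in> acar A" using x Dob_white[OF L True] by simp
      then show ?thesis using e e' c c' True cb_excl[of I] unfolding corresponds_def by simp
    next
      case False
      show ?thesis
      proof (cases "is_black I")
        case True
        then have "x \<in> acar B" using x Dob_black[OF L True] by simp
        then show ?thesis using e e' c c' False unfolding corresponds_def by simp
      next
        case False2: False
        then show ?thesis using e e' False by simp
      qed
    qed
  qed
  then show ?thesis using ob by blast
qed




definition stdMor :: "('u, 'k) kalg \<Rightarrow> ('u, 'k) kalg \<Rightarrow> ('u \<Rightarrow> 'u \<Rightarrow> 'u) \<Rightarrow> 'u defect_mor" where
  "stdMor A B \<phi> I J f x = (if is_white I \<and> is_gen J then \<phi> x (aone B)
      else if is_black I \<and> is_gen J then \<phi> (aone A) x else x)"

lemma subint_white: "cb_subint I K \<Longrightarrow> is_white K \<Longrightarrow> is_white I"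
  and subint_black: "cb_subint I K \<Longrightarrow> is_black K \<Longrightarrow> is_black I"
  by (auto simp: cb_subint_def is_white_def is_black_def iset_def cb_obj_def)

lemma gen_of_mid: "cb_obj I \<Longrightarrow> pi/2 \<in> iset I \<Longrightarrow> is_gen I"
  by (auto simp: is_gen_def iset_def cb_obj_def)

lemma mid_gen: "is_gen I \<Longrightarrow> pi/2 \<in> iset I" "is_gen I \<Longrightarrow> pi/2 \<in> iint I"
  by (auto simp: is_gen_def iset_def iint_def)

lemma stdMor_id: "\<not> (is_white I \<and> is_gen J) \<Longrightarrow> \<not> (is_black I \<and> is_gen J) \<Longrightarrow> stdMor A B \<phi> I J f = (\<lambda>x. x)"
  by (rule ext) (auto simp: stdMor_def)

lemma stdMor_W: "is_white I \<Longrightarrow> is_gen J \<Longrightarrow> stdMor A B \<phi> I J f = (\<lambda>x. \<phi> x (aone B))"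
  by (rule ext) (simp add: stdMor_def)

lemma stdMor_B: "is_black I \<Longrightarrow> is_gen J \<Longrightarrow> stdMor A B \<phi> I J f = (\<lambda>x. \<phi> (aone A) x)"
  using cb_excl[of I] by (intro ext) (simp add: stdMor_def)

lemma stdOb_W: "is_white I \<Longrightarrow> stdOb A B D I = lc_net_obj A I"
  and stdOb_B: "is_black I \<Longrightarrow> stdOb A B D I = lc_net_obj B I"
  and stdOb_G: "is_gen I \<Longrightarrow> stdOb A B D I = lc_net_obj D I"
  using cb_excl[of I] by (simp_all add: stdOb_def)

lemma part2:
  assumes A: "is_kalg A" and cA: "kalg_comm A" and B: "is_kalg B" and cB: "kalg_comm B"
    and D: "is_kalg D" and t: "tensor_center_hom A B D \<phi>"
  shows "lc_defect A B (stdOb A B D) (stdMor A B \<phi>) \<and> corresponds A B (stdOb A B D) (stdMor A B \<phi>) D \<phi>"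
proof -
  define Dob where "Dob = stdOb A B D"
  define Dmor where "Dmor = stdMor A B \<phi>"
  have hA: "kalg_hom A D (\<lambda>a. \<phi> a (aone B))" and zA: "\<forall>a\<in>acar A. \<phi> a (aone B) \<in> kalg_center D"
    using tensor_left_hom[OF D A B t] by auto
  have hB: "kalg_hom B D (\<lambda>b. \<phi> (aone A) b)" and zB: "\<forall>b\<in>acar B. \<phi> (aone A) b \<in> kalg_center D"
    using tensor_right_hom[OF D A B t] by auto
  have zc: "kalg_center D \<subseteq> acar D" by (auto simp: kalg_center_def)
  have c1: "\<forall>I. cb_obj I \<longrightarrow> is_kalg (Dob I)"
    using A B D by (auto simp: Dob_def stdOb_def is_kalg_lc)
  have c2: "\<forall>I J f. cb_hom I J f \<longrightarrow> kalg_hom (Dob I) (Dob J) (Dmor I J f)"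
  proof (intro allI impI)
    fix I J f assume h: "cb_hom I J f"
    have cI: "cb_obj I" and cJ: "cb_obj J" using h by (simp_all add: cb_hom_def)
    consider "is_white I" | "is_black I" | "is_gen I" using cb_cases[OF cI] by blast
    then show "kalg_hom (Dob I) (Dob J) (Dmor I J f)"
    proof cases
      case 1
      then consider "is_white J" | "is_gen J" using hom_white[OF h] cb_cases[OF cJ] by blast
      then show ?thesis
      proof cases
        case 2 then show ?thesis using 1 hom_lc[OF hA cA zA]
          by (simp add: Dob_def Dmor_def stdMor_W stdOb_W stdOb_G)
      next
        case w: 1 then show ?thesis using 1 hom_id_lc[OF cA] cb_excl[of I] cb_excl[of J]
          by (simp add: Dob_def Dmor_def stdMor_id stdOb_W)
      qed
    next
      case 2
      then consider "is_black J" | "is_gen J" using hom_black[OF h] cb_cases[OF cJ] by blast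
      then show ?thesis
      proof cases
        case g: 2 then show ?thesis using 2 hom_lc[OF hB cB zB]
          by (simp add: Dob_def Dmor_def stdMor_B stdOb_B stdOb_G)
      next
        case w: 1 then show ?thesis using 2 hom_id_lc[OF cB] cb_excl[of I] cb_excl[of J]
          by (simp add: Dob_def Dmor_def stdMor_id stdOb_B)
      qed
    next
      case 3
      have gJ: "is_gen J" by (rule hom_gen[OF h 3])
      have "ori I = ori J" by (rule gen_ori[OF h 3])
      then show ?thesis using 3 gJ hom_id cb_excl[of I] lc_net_ori[of I J D]
        by (simp add: Dob_def Dmor_def stdMor_id stdOb_G)
    qed
  qed
  have c3: "\<forall>I J f f'. cb_hom I J f \<and> cb_hom I J f' \<and> (\<forall>t\<in>iset I. f t = f' t) \<longrightarrow>
        (\<forall>x\<in>acar (Dob I). Dmor I J f x = Dmor I J f' x)"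
    by (simp add: Dmor_def stdMor_def)
  have c4: "\<forall>I. cb_obj I \<longrightarrow> is_identity_on (Dob I) (Dmor I I id)"
  proof (intro allI impI)
    fix I :: ointv
    show "is_identity_on (Dob I) (Dmor I I id)"
      using cb_excl[of I] by (auto simp: Dmor_def stdMor_def is_identity_on_def)
  qed
  have c5: "\<forall>I J K f g. cb_hom I J f \<and> cb_hom J K g \<longrightarrow>
        (\<forall>x\<in>acar (Dob I). Dmor I K (g \<circ> f) x = Dmor J K g (Dmor I J f x))"
  proof (intro allI impI ballI)
    fix I J K f g x assume hh: "cb_hom I J f \<and> cb_hom J K g"
    then have h1: "cb_hom I J f" and h2: "cb_hom J K g" by auto
    have cI: "cb_obj I" and cJ: "cb_obj J" and cK: "cb_obj K" using h1 h2 by (simp_all add: cb_hom_def)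
    consider "is_white I" | "is_black I" | "is_gen I" using cb_cases[OF cI] by blast
    then show "Dmor I K (g \<circ> f) x = Dmor J K g (Dmor I J f x)"
    proof cases
      case 1
      then consider "is_white J" | "is_gen J" using hom_white[OF h1] cb_cases[OF cJ] by blast
      then show ?thesis
      proof cases
        case 2 then show ?thesis using 1 hom_gen[OF h2 2] cb_excl[of I] cb_excl[of J] cb_excl[of K]
          by (simp add: Dmor_def stdMor_def)
      next
        case w: 1 then show ?thesis using 1 cb_excl[of I] cb_excl[of J] by (simp add: Dmor_def stdMor_def)
      qed
    next
      case 2
      then consider "is_black J" | "is_gen J" using hom_black[OF h1] cb_cases[OF cJ] by blast
      then show ?thesis
      proof cases
        case g: 2 then show ?thesis using 2 hom_gen[OF h2 g] cb_excl[of I] cb_excl[of J] cb_excl[of K]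
          by (simp add: Dmor_def stdMor_def)
      next
        case w: 1 then show ?thesis using 2 cb_excl[of I] cb_excl[of J] by (simp add: Dmor_def stdMor_def)
      qed
    next
      case 3
      have gJ: "is_gen J" by (rule hom_gen[OF h1 3])
      have gK: "is_gen K" by (rule hom_gen[OF h2 gJ])
      show ?thesis using 3 gJ gK cb_excl[of I] cb_excl[of J] by (simp add: Dmor_def stdMor_def)
    qed
  qed
  have c6: "\<forall>I. cb_obj I \<longrightarrow> Dob (irev I) = kalg_op (Dob I)"
    by (simp add: Dob_def stdOb_def lc_net_irev)
  have c7: "\<forall>I. int_obj I \<longrightarrow> Dob (phiW_obj I) = lc_net_obj A I \<and> Dob (phiB_obj I) = lc_net_obj B I"
  proof (intro allI impI conjI)
    fix I assume i: "int_obj I"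
    have o: "ori (phiW_obj I) = ori I" "ori (phiB_obj I) = ori I" by (simp_all add: phiW_obj_def phiB_obj_def)
    show "Dob (phiW_obj I) = lc_net_obj A I" using phiW_white[OF i] o lc_net_ori[of "phiW_obj I" I A]
      by (simp add: Dob_def stdOb_W)
    show "Dob (phiB_obj I) = lc_net_obj B I" using phiB_black[OF i] o lc_net_ori[of "phiB_obj I" I B]
      by (simp add: Dob_def stdOb_B)
  qed
  have c8: "\<forall>I J f. int_hom I J f \<longrightarrow>
        is_identity_on (Dob (phiW_obj I)) (Dmor (phiW_obj I) (phiW_obj J) (phiW_mor f)) \<and>
        is_identity_on (Dob (phiB_obj I)) (Dmor (phiB_obj I) (phiB_obj J) (phiB_mor f))"
  proof (intro allI impI)
    fix I J f assume h: "int_hom I J f"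
    then have "int_obj J" by (simp add: int_hom_def)
    then have "is_white (phiW_obj J)" "is_black (phiB_obj J)" by (simp_all add: phiW_white phiB_black)
    then show "is_identity_on (Dob (phiW_obj I)) (Dmor (phiW_obj I) (phiW_obj J) (phiW_mor f)) \<and>
        is_identity_on (Dob (phiB_obj I)) (Dmor (phiB_obj I) (phiB_obj J) (phiB_mor f))"
      using cb_excl[of "phiW_obj J"] cb_excl[of "phiB_obj J"]
      by (simp add: is_identity_on_def Dmor_def stdMor_def)
  qed
  have c9: "\<forall>I J f. cb_hom I J f \<and> is_gen I \<and> is_gen J \<longrightarrow> inj_on (Dmor I J f) (acar (Dob I))"
  proof (intro allI impI)
    fix I J :: ointv and f assume "cb_hom I J f \<and> is_gen I \<and> is_gen J"
    then show "inj_on (Dmor I J f) (acar (Dob I))"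
      using cb_excl[of I] by (auto simp: Dmor_def stdMor_def inj_on_def)
  qed
  have img: "Dmor I K id x \<in> acar D \<and> (\<not> is_gen I \<longrightarrow> Dmor I K id x \<in> kalg_center D)"
    if s: "cb_subint I K" and gK: "is_gen K" and x: "x \<in> acar (Dob I)" for I K x
  proof -
    have cI: "cb_obj I" using s by (simp add: cb_subint_def)
    consider "is_white I" | "is_black I" | "is_gen I" using cb_cases[OF cI] by blast
    then show ?thesis
    proof cases
      case 1 then show ?thesis using x zA zc gK cb_excl[of I]
        by (auto simp: Dmor_def stdMor_def Dob_def stdOb_W)
    next
      case 2 then show ?thesis using x zB zc gK cb_excl[of I]
        by (auto simp: Dmor_def stdMor_def Dob_def stdOb_B)
    next
      case 3 then show ?thesis using x cb_excl[of I] by (simp add: Dmor_def stdMor_def Dob_def stdOb_G)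
    qed
  qed
  have comm_lc: "amul (lc_net_obj X K) a b = amul (lc_net_obj X K) b a"
    if "amul X a b = amul X b a" for X :: "('a, 'b) kalg" and K a b
    using that by (simp add: lc_net_obj_def)
  have c10: "\<forall>I J K. cb_subint I K \<and> cb_subint J K \<and> iint I \<inter> iint J = {} \<longrightarrow>
        (\<forall>x\<in>acar (Dob I). \<forall>y\<in>acar (Dob J).
           amul (Dob K) (Dmor I K id x) (Dmor J K id y) = amul (Dob K) (Dmor J K id y) (Dmor I K id x))"
  proof (intro allI impI ballI)
    fix I J K x y assume sss: "cb_subint I K \<and> cb_subint J K \<and> iint I \<inter> iint J = {}"
      and x: "x \<in> acar (Dob I)" and y: "y \<in> acar (Dob J)"
    have sI: "cb_subint I K" and sJ: "cb_subint J K" and dj: "iint I \<inter> iint J = {}" using sss by auto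
    have cK: "cb_obj K" using sI by (simp add: cb_subint_def)
    consider "is_white K" | "is_black K" | "is_gen K" using cb_cases[OF cK] by blast
    then show "amul (Dob K) (Dmor I K id x) (Dmor J K id y) = amul (Dob K) (Dmor J K id y) (Dmor I K id x)"
    proof cases
      case 1
      have wI: "is_white I" and wJ: "is_white J" using subint_white sI sJ 1 by blast+
      have "x \<in> acar A" "y \<in> acar A" using x y wI wJ by (simp_all add: Dob_def stdOb_W)
      then have "amul A x y = amul A y x" using cA by (simp add: kalg_comm_def)
      then show ?thesis using 1 wI wJ cb_excl[of I] cb_excl[of J] cb_excl[of K] comm_lc[of A x y K]
        by (simp add: Dmor_def stdMor_def Dob_def stdOb_W)
    next
      case 2
      have wI: "is_black I" and wJ: "is_black J" using subint_black sI sJ 2 by blast+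
      have "x \<in> acar B" "y \<in> acar B" using x y wI wJ by (simp_all add: Dob_def stdOb_B)
      then have "amul B x y = amul B y x" using cB by (simp add: kalg_comm_def)
      then show ?thesis using 2 wI wJ cb_excl[of I] cb_excl[of J] cb_excl[of K] comm_lc[of B x y K]
        by (simp add: Dmor_def stdMor_def Dob_def stdOb_B)
    next
      case 3
      have iI: "Dmor I K id x \<in> acar D \<and> (\<not> is_gen I \<longrightarrow> Dmor I K id x \<in> kalg_center D)"
        by (rule img[OF sI 3 x])
      have iJ: "Dmor J K id y \<in> acar D \<and> (\<not> is_gen J \<longrightarrow> Dmor J K id y \<in> kalg_center D)"
        by (rule img[OF sJ 3 y])
      have "\<not> (is_gen I \<and> is_gen J)" using mid_gen(2)[of I] mid_gen(2)[of J] dj by blast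
      then have "amul D (Dmor I K id x) (Dmor J K id y) = amul D (Dmor J K id y) (Dmor I K id x)"
        using iI iJ unfolding kalg_center_def by auto
      then show ?thesis using 3 comm_lc[of D] by (simp add: Dob_def stdOb_G)
    qed
  qed
  have c11: "\<forall>I J K. cb_subint I K \<and> cb_subint J K \<and> iset K = iset I \<union> iset J \<longrightarrow>
        kalg_generates (Dob K) (Dmor I K id ` acar (Dob I) \<union> Dmor J K id ` acar (Dob J))"
  proof (intro allI impI)
    fix I J K assume sss: "cb_subint I K \<and> cb_subint J K \<and> iset K = iset I \<union> iset J"
    have sI: "cb_subint I K" and sJ: "cb_subint J K" and un: "iset K = iset I \<union> iset J" using sss by auto
    have cK: "cb_obj K" using sI by (simp add: cb_subint_def)
    have good: "acar (Dob K) \<subseteq> Dmor L K id ` acar (Dob L)"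
      if sL: "cb_subint L K" and same: "(is_white L \<and> is_white K) \<or> (is_black L \<and> is_black K) \<or> (is_gen L \<and> is_gen K)" for L
    proof -
      have "\<not> (is_white L \<and> is_gen K)" "\<not> (is_black L \<and> is_gen K)" using same cb_excl[of L] cb_excl[of K] by auto
      then have "Dmor L K id = (\<lambda>x. x)" unfolding Dmor_def by (rule stdMor_id)
      moreover have "ori L = ori K" using sL by (simp add: cb_subint_def)
      then have "Dob L = Dob K" using same lc_net_ori[of L K]
        by (auto simp: Dob_def stdOb_W stdOb_B stdOb_G)
      ultimately show ?thesis by simp
    qed
    have "acar (Dob K) \<subseteq> Dmor I K id ` acar (Dob I) \<union> Dmor J K id ` acar (Dob J)"
    proof -
      consider "is_white K" | "is_black K" | "is_gen K" using cb_cases[OF cK] by blast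
      then show ?thesis
      proof cases
        case 1 then show ?thesis using good[OF sI] subint_white[OF sI] by blast
      next
        case 2 then show ?thesis using good[OF sI] subint_black[OF sI] by blast
      next
        case 3
        have "pi/2 \<in> iset I \<or> pi/2 \<in> iset J" using mid_gen(1)[OF 3] un by blast
        moreover have "cb_obj I" "cb_obj J" using sI sJ by (simp_all add: cb_subint_def)
        ultimately have "is_gen I \<or> is_gen J" using gen_of_mid[of I] gen_of_mid[of J] by blast
        then show ?thesis using good[OF sI] good[OF sJ] 3 by blast
      qed
    qed
    then show "kalg_generates (Dob K) (Dmor I K id ` acar (Dob I) \<union> Dmor J K id ` acar (Dob J))"
      unfolding kalg_generates_def by blast
  qed
  have c12: "\<forall>I J f. cb_hom I J f \<and> ori I = ori J \<and>
        ((is_white I \<and> is_white J) \<or> (is_black I \<and> is_black J) \<or> (is_gen I \<and> is_gen J)) \<longrightarrow>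
        Dob J = Dob I \<and> is_identity_on (Dob I) (Dmor I J f)"
  proof (intro allI impI conjI)
    fix I J f assume a: "cb_hom I J f \<and> ori I = ori J \<and>
        ((is_white I \<and> is_white J) \<or> (is_black I \<and> is_black J) \<or> (is_gen I \<and> is_gen J))"
    then show "Dob J = Dob I" using lc_net_ori[of J I]
      by (auto simp: Dob_def stdOb_W stdOb_B stdOb_G)
    show "is_identity_on (Dob I) (Dmor I J f)" using a cb_excl[of I] cb_excl[of J]
      by (auto simp: is_identity_on_def Dmor_def stdMor_def)
  qed
  have c13: "\<forall>I J f I' J' f'. cb_hom I J f \<and> cb_hom I' J' f' \<and> is_white I \<and> is_white I' \<and>
        is_gen J \<and> is_gen J' \<longrightarrow> (\<forall>x\<in>acar (Dob I). Dmor I J f x = Dmor I' J' f' x)"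
    by (simp add: Dmor_def stdMor_def)
  have c14: "\<forall>I J f I' J' f'. cb_hom I J f \<and> cb_hom I' J' f' \<and> is_black I \<and> is_black I' \<and>
        is_gen J \<and> is_gen J' \<longrightarrow> (\<forall>x\<in>acar (Dob I). Dmor I J f x = Dmor I' J' f' x)"
  proof (intro allI impI)
    fix I J I' J' :: ointv and f f' assume "cb_hom I J f \<and> cb_hom I' J' f' \<and> is_black I \<and> is_black I' \<and>
        is_gen J \<and> is_gen J'"
    then show "\<forall>x\<in>acar (Dob I). Dmor I J f x = Dmor I' J' f' x"
      using cb_excl[of I] cb_excl[of I'] by (auto simp: Dmor_def stdMor_def)
  qed
  have L: "lc_defect A B Dob Dmor"
    unfolding lc_defect_def by (intro conjI c1 c2 c3 c4 c5 c6 c7 c8 c9 c10 c11 c12 c13 c14)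
  have corr: "corresponds A B Dob Dmor D \<phi>"
    unfolding corresponds_def using num_facts cb_excl[of W0] cb_excl[of B0]
    by (simp add: Dob_def stdOb_G Dmor_def stdMor_def lc_net_obj_def)
  show ?thesis using L corr unfolding Dob_def Dmor_def by simp
qed



theorem mainTheorem2:
  fixes A B :: "('u, 'k::field) kalg"
  assumes "is_kalg A" and "kalg_comm A" and "is_kalg B" and "kalg_comm B"
  shows
    "(\<forall>Dob Dmor. lc_defect A B Dob Dmor \<longrightarrow>
        is_kalg (Dob I0) \<and>
        (\<exists>\<phi>. tensor_center_hom A B (Dob I0) \<phi> \<and> corresponds A B Dob Dmor (Dob I0) \<phi>) \<and>
        (\<forall>\<phi> \<psi>. tensor_center_hom A B (Dob I0) \<phi> \<and> corresponds A B Dob Dmor (Dob I0) \<phi> \<and>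
                 tensor_center_hom A B (Dob I0) \<psi> \<and> corresponds A B Dob Dmor (Dob I0) \<psi> \<longrightarrow>
                 (\<forall>a\<in>acar A. \<forall>b\<in>acar B. \<phi> a b = \<psi> a b)))
     \<and>
     (\<forall>D \<phi>. is_kalg D \<and> tensor_center_hom A B D \<phi> \<longrightarrow>
        (\<exists>Dob Dmor. lc_defect A B Dob Dmor \<and> corresponds A B Dob Dmor D \<phi>))
     \<and>
     (\<forall>Dob Dmor Dob' Dmor' D \<phi>.
        lc_defect A B Dob Dmor \<and> lc_defect A B Dob' Dmor' \<and>
        corresponds A B Dob Dmor D \<phi> \<and> corresponds A B Dob' Dmor' D \<phi> \<longrightarrow>
        (\<forall>I. cb_obj I \<longrightarrow> Dob I = Dob' I) \<and>
        (\<forall>I J f. cb_hom I J f \<longrightarrow> (\<forall>x\<in>acar (Dob I). Dmor I J f x = Dmor' I J f x)))"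
  proof -
  have p1: "\<forall>Dob Dmor. lc_defect A B Dob Dmor \<longrightarrow>
        is_kalg (Dob I0) \<and>
        (\<exists>\<phi>. tensor_center_hom A B (Dob I0) \<phi> \<and> corresponds A B Dob Dmor (Dob I0) \<phi>) \<and>
        (\<forall>\<phi> \<psi>. tensor_center_hom A B (Dob I0) \<phi> \<and> corresponds A B Dob Dmor (Dob I0) \<phi> \<and>
                 tensor_center_hom A B (Dob I0) \<psi> \<and> corresponds A B Dob Dmor (Dob I0) \<psi> \<longrightarrow>
                 (\<forall>a\<in>acar A. \<forall>b\<in>acar B. \<phi> a b = \<psi> a b))"
    by (intro allI impI, rule part1[OF assms(1) assms(3)])
  have p2: "\<forall>D \<phi>. is_kalg D \<and> tensor_center_hom A B D \<phi> \<longrightarrow>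
        (\<exists>Dob Dmor. lc_defect A B Dob Dmor \<and> corresponds A B Dob Dmor D \<phi>)"
  proof (intro allI impI)
    fix D \<phi> assume a: "is_kalg D \<and> tensor_center_hom A B D \<phi>"
    have "lc_defect A B (stdOb A B D) (stdMor A B \<phi>) \<and> corresponds A B (stdOb A B D) (stdMor A B \<phi>) D \<phi>"
      using part2[OF assms(1) assms(2) assms(3) assms(4)] a by blast
    then show "\<exists>Dob Dmor. lc_defect A B Dob Dmor \<and> corresponds A B Dob Dmor D \<phi>" by blast
  qed
  have p3: "\<forall>Dob Dmor Dob' Dmor' D \<phi>.
        lc_defect A B Dob Dmor \<and> lc_defect A B Dob' Dmor' \<and>
        corresponds A B Dob Dmor D \<phi> \<and> corresponds A B Dob' Dmor' D \<phi> \<longrightarrow>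
        (\<forall>I. cb_obj I \<longrightarrow> Dob I = Dob' I) \<and>
        (\<forall>I J f. cb_hom I J f \<longrightarrow> (\<forall>x\<in>acar (Dob I). Dmor I J f x = Dmor' I J f x))"
  proof (intro allI impI)
    fix Dob Dmor Dob' Dmor' D \<phi>
    assume a: "lc_defect A B Dob Dmor \<and> lc_defect A B Dob' Dmor' \<and>
        corresponds A B Dob Dmor D \<phi> \<and> corresponds A B Dob' Dmor' D \<phi>"
    then have a1: "lc_defect A B Dob Dmor" and a2: "lc_defect A B Dob' Dmor'"
      and a3: "corresponds A B Dob Dmor D \<phi>" and a4: "corresponds A B Dob' Dmor' D \<phi>" by auto
    show "(\<forall>I. cb_obj I \<longrightarrow> Dob I = Dob' I) \<and>
        (\<forall>I J f. cb_hom I J f \<longrightarrow> (\<forall>x\<in>acar (Dob I). Dmor I J f x = Dmor' I J f x))"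
      by (rule part3[OF a1 a2 a3 a4])
  qed
  show ?thesis using p1 p2 p3 by (intro conjI)
qed

end
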